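(* Under the setting of the context, for each $i\in\{1,\dots,K\}$ and every $\varphi\in C_c^\infty(\mathbb R^{2d})$, $$\int_{\mathbb R^{2d}}\lambda_i(x,v)\int_{\mathbb R^d}\big(\varphi(x,v')-\varphi(x,v)\big)k_i(x,v,dv')\,\mu(dx\,dv)=-\beta\int_{\mathbb R^{2d}}\varphi(x,v)\,\big(F_i(x)\cdot v\big)\,\mu(dx\,dv).$$
   Context: $\beta>0$; $M$ a symmetric positive definite $d\times d$ matrix; $U:\mathbb R^d\to\mathbb R$ smooth with $e^{-\beta U}$ integrable; $\nabla U=\sum_{i=0}^K F_i$ with $F_i:\mathbb R^d\to\mathbb R^d$ continuous and $F_i(x)\ne0$ for all $x$, $i\ge1$; $\varepsilon:\mathbb R^d\to(0,\infty)$ continuous. $\mu$ is the probability measure on $\mathbb R^{2d}$ with density proportional to $\exp(-\beta(U(x)+\frac12v^TMv))$. $(s)_+=\max(s,0)$; $G$ is standard Gaussian; $\Theta(\eta)=\mathbb E[(\eta+G)_+]$. For $i\ge1$: $\eta_i(x,v)=\varepsilon(x)\sqrt\beta\,\frac{v\cdot F_i(x)}{|M^{-1/2}F_i(x)|}$, $\lambda_i(x,v)=\frac{\sqrt\beta}{\varepsilon(x)}|M^{-1/2}F_i(x)|\Theta(\eta_i(x,v))$, and $k_i(x,v,\cdot)$ is the law of $v-\frac{2\varepsilon(x)}{\sqrt\beta(1+\varepsilon(x)^2)}(\eta_i(x,v)+\widetilde G)\frac{M^{-1}F_i(x)}{|M^{-1/2}F_i(x)|}$ where $\widetilde G$ has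 density $y\mapsto\frac{1}{\Theta(\eta)\sqrt{2\pi}}(\eta+y)_+e^{-y^2/2}$ with $\eta=\eta_i(x,v)$. *)

theory Defs
  imports "HOL-Analysis.Analysis" "HOL-Probability.Probability"
begin

fun Ck :: "nat \<Rightarrow> ('a::euclidean_space \<Rightarrow> real) \<Rightarrow> bool" where
  "Ck 0 f = continuous_on UNIV f"
| "Ck (Suc n) f = ((\<forall>x. f differentiable (at x)) \<and>
      (\<forall>b\<in>Basis. Ck n (\<lambda>x. frechet_derivative f (at x) b)))"

definition smooth_fun :: "('a::euclidean_space \<Rightarrow> real) \<Rightarrow> bool" where
  "smooth_fun f \<longleftrightarrow> (\<forall>n. Ck n f)"

definition compact_support :: "('a::euclidean_space \<Rightarrow> real) \<Rightarrow> bool" where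
  "compact_support f \<longleftrightarrow> compact (closure {z. f z \<noteq> 0})"

definition Cc_inf :: "('a::euclidean_space \<Rightarrow> real) \<Rightarrow> bool" where
  "Cc_inf f \<longleftrightarrow> smooth_fun f \<and> compact_support f"

definition sym_posdef :: "real^'n^'n \<Rightarrow> bool" where
  "sym_posdef M \<longleftrightarrow> transpose M = M \<and> (\<forall>v. v \<noteq> 0 \<longrightarrow> v \<bullet> (M *v v) > 0)"

text \<open>|M^{-1/2} w| for symmetric positive definite M, written out as
  sqrt (w^T M^{-1} w) (= |S w| for the symmetric square root S of M^{-1}).\<close>
definition norm_Minvhalf :: "real^'n^'n \<Rightarrow> real^'n \<Rightarrow> real" where
  "norm_Minvhalf M w = sqrt (w \<bullet> (matrix_inv M *v w))"

definition Theta :: "real \<Rightarrow> real" where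
  "Theta \<eta> = (\<integral>y. max (\<eta> + y) 0 * std_normal_density y \<partial>lborel)"

definition Ham :: "(real^'n \<Rightarrow> real) \<Rightarrow> real^'n^'n \<Rightarrow> (real^'n) \<times> (real^'n) \<Rightarrow> real" where
  "Ham U M z = U (fst z) + (1/2) * (snd z \<bullet> (M *v snd z))"

definition mu :: "real \<Rightarrow> (real^'n \<Rightarrow> real) \<Rightarrow> real^'n^'n \<Rightarrow> ((real^'n) \<times> (real^'n)) measure" where
  "mu \<beta> U M = density lborel (\<lambda>z. ennreal (exp (- \<beta> * Ham U M z) /
        (\<integral>w. exp (- \<beta> * Ham U M w) \<partial>lborel)))"

definition eta_i :: "real \<Rightarrow> real^'n^'n \<Rightarrow> (real^'n \<Rightarrow> real) \<Rightarrow> (real^'n \<Rightarrow> real^'n)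
    \<Rightarrow> real^'n \<Rightarrow> real^'n \<Rightarrow> real" where
  "eta_i \<beta> M \<epsilon> Fi x v = \<epsilon> x * sqrt \<beta> * (v \<bullet> Fi x) / norm_Minvhalf M (Fi x)"

definition lambda_i :: "real \<Rightarrow> real^'n^'n \<Rightarrow> (real^'n \<Rightarrow> real) \<Rightarrow> (real^'n \<Rightarrow> real^'n)
    \<Rightarrow> real^'n \<Rightarrow> real^'n \<Rightarrow> real" where
  "lambda_i \<beta> M \<epsilon> Fi x v =
     sqrt \<beta> / \<epsilon> x * norm_Minvhalf M (Fi x) * Theta (eta_i \<beta> M \<epsilon> Fi x v)"

definition Gt_density :: "real \<Rightarrow> real \<Rightarrow> real" where
  "Gt_density \<eta> y = max (\<eta> + y) 0 * exp (- (y^2) / 2) / (Theta \<eta> * sqrt (2 * pi))"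

definition k_i :: "real \<Rightarrow> real^'n^'n \<Rightarrow> (real^'n \<Rightarrow> real) \<Rightarrow> (real^'n \<Rightarrow> real^'n)
    \<Rightarrow> real^'n \<Rightarrow> real^'n \<Rightarrow> (real^'n) measure" where
  "k_i \<beta> M \<epsilon> Fi x v =
     (let \<eta> = eta_i \<beta> M \<epsilon> Fi x v in
      distr (density lborel (\<lambda>y. ennreal (Gt_density \<eta> y))) borel
        (\<lambda>y. v - ((2 * \<epsilon> x / (sqrt \<beta> * (1 + (\<epsilon> x)^2))) * (\<eta> + y)
                   / norm_Minvhalf M (Fi x)) *\<^sub>R (matrix_inv M *v Fi x)))"

end

theory Submission
  imports Defs
begin

lemma gauss1:
  fixes c :: real assumes c: "c > 0"
  shows "integrable lborel (\<lambda>t::real. (1 + \<bar>t\<bar>) * exp (- c * t^2))"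
proof -
  define \<sigma> where "\<sigma> = sqrt (1/(2*c))"
  have s: "\<sigma> > 0" using c by (simp add: \<sigma>_def)
  have s2: "\<sigma>^2 = 1/(2*c)" using c by (simp add: \<sigma>_def)
  define K where "K = sqrt (2*pi*\<sigma>^2)"
  have K: "K > 0" using s by (simp add: K_def)
  have eq: "exp (- c * t^2) = K * normal_density 0 \<sigma> t" for t
    using K c s2 s by (simp add: normal_density_def K_def field_simps)
  have "integrable lborel (\<lambda>t. K * (normal_density 0 \<sigma> t * \<bar>t - 0\<bar>^0) + K * (normal_density 0 \<sigma> t * \<bar>t - 0\<bar>^1))"
    by (intro Bochner_Integration.integrable_add Bochner_Integration.integrable_mult_right integrable_normal_moment_abs s)
  then show ?thesis
    by (rule Bochner_Integration.integrable_cong[THEN iffD1, rotated 2]) (auto simp: eq[simplified] algebra_simps)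
qed

lemma one_plus_sum_le_prod:
  fixes f :: "'b \<Rightarrow> real"
  assumes "finite I" "\<And>i. i \<in> I \<Longrightarrow> 0 \<le> f i"
  shows "1 + (\<Sum>i\<in>I. f i) \<le> (\<Prod>i\<in>I. 1 + f i)"
  using assms
proof (induction I rule: finite_induct)
  case (insert x F)
  have h: "1 + sum f F \<le> prod (\<lambda>i. 1 + f i) F" using insert by auto
  have p: "0 \<le> sum f F" using insert by (auto intro: sum_nonneg)
  have fx: "0 \<le> f x" using insert by auto
  have "1 + sum f (insert x F) = (1 + sum f F) + f x" using insert by simp
  also have "\<dots> \<le> (1 + sum f F) * (1 + f x)" using p fx by (simp add: algebra_simps)
  also have "\<dots> \<le> prod (\<lambda>i. 1 + f i) F * (1 + f x)" using h fx by (intro mult_right_mono) auto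
  finally show ?case using insert by (simp add: mult.commute)
qed simp

lemma gaussN:
  fixes c :: real assumes c: "c > 0"
  shows "integrable lborel (\<lambda>v::'a::euclidean_space. (1 + norm v) * exp (- c * (norm v)^2))"
proof (rule Bochner_Integration.integrable_bound)
  define g where "g t = (1 + \<bar>t\<bar>) * exp (- c * t^2)" for t :: real
  have g0: "0 \<le> g t" for t by (simp add: g_def)
  show "integrable lborel (\<lambda>v::'a. 2 * (\<Prod>b\<in>Basis. g (v \<bullet> b)))"
  proof (intro Bochner_Integration.integrable_mult_right integrableI_bounded)
    show "(\<lambda>v::'a. \<Prod>b\<in>Basis. g (v \<bullet> b)) \<in> borel_measurable lborel"
      unfolding g_def by measurable
    have "(\<integral>\<^sup>+ v. ennreal (norm (\<Prod>b\<in>Basis. g (v \<bullet> b))) \<partial>(lborel::'a measure))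
        = (\<integral>\<^sup>+ v. (\<Prod>b\<in>Basis. ennreal (g (v \<bullet> b))) \<partial>(lborel::'a measure))"
      by (auto intro!: nn_integral_cong simp: g0 prod_nonneg abs_prod prod_ennreal)
    also have "\<dots> = (\<Prod>b\<in>(Basis::'a set). (\<integral>\<^sup>+ t. ennreal (g t) \<partial>lborel))"
      by (rule nn_integral_lborel_prod) (auto simp: g_def)
    also have "\<dots> < \<infinity>"
    proof -
      have "(\<integral>\<^sup>+ t. ennreal (g t) \<partial>lborel) < \<infinity>"
        using gauss1[OF c] unfolding g_def
        by (simp add: integrable_iff_bounded abs_mult)
      then show ?thesis by (simp add: power_less_top_ennreal)
    qed
    finally show "(\<integral>\<^sup>+ v. ennreal (norm (\<Prod>b\<in>Basis. g (v \<bullet> b))) \<partial>(lborel::'a measure)) < \<infinity>" .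
  qed
  show "(\<lambda>v::'a. (1 + norm v) * exp (- c * (norm v)^2)) \<in> borel_measurable lborel" by measurable
  have bnd: "norm ((1 + norm v) * exp (- c * (norm v)^2)) \<le> norm (2 * (\<Prod>b\<in>Basis. g (v \<bullet> b)))" for v :: 'a
  proof -
    have n2: "(norm v)^2 = (\<Sum>b\<in>Basis. (v \<bullet> b)^2)"
      unfolding power2_norm_eq_inner euclidean_inner[of v v] by (simp add: power2_eq_square)
    have ex: "exp (- c * (norm v)^2) = (\<Prod>b\<in>Basis. exp (- c * (v\<bullet>b)^2))"
      by (simp add: n2 sum_distrib_left exp_sum[symmetric] sum_negf)
    have l1: "norm v \<le> (\<Sum>b\<in>Basis. \<bar>v \<bullet> b\<bar>)" by (rule norm_le_l1)
    have pp: "1 + (\<Sum>b\<in>Basis. \<bar>v \<bullet> b\<bar>) \<le> (\<Prod>b\<in>Basis. 1 + \<bar>v \<bullet> b\<bar>)"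
      by (rule one_plus_sum_le_prod) auto
    have "1 + norm v \<le> 2 * (\<Prod>b\<in>Basis. 1 + \<bar>v \<bullet> b\<bar>)"
    proof -
      have "1 \<le> (\<Prod>b\<in>(Basis::'a set). 1 + \<bar>v \<bullet> b\<bar>)"
        by (rule prod_ge_1) auto
      then show ?thesis using l1 pp by linarith
    qed
    then have "(1 + norm v) * exp (- c * (norm v)^2) \<le> 2 * (\<Prod>b\<in>Basis. 1 + \<bar>v \<bullet> b\<bar>) * (\<Prod>b\<in>Basis. exp (- c * (v\<bullet>b)^2))"
      unfolding ex by (intro mult_right_mono) (auto intro: prod_nonneg)
    also have "\<dots> = 2 * (\<Prod>b\<in>Basis. g (v \<bullet> b))"
      by (simp add: g_def prod.distrib)
    finally show "norm ((1 + norm v) * exp (- c * (norm v)^2)) \<le> norm (2 * (\<Prod>b\<in>Basis. g (v \<bullet> b)))"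
      using g0 by (simp add: prod_nonneg)
  qed
  then show "AE v in (lborel::'a measure). norm ((1 + norm v) * exp (- c * (norm v)^2)) \<le> norm (2 * (\<Prod>b\<in>Basis. g (v \<bullet> b)))"
    by simp
qed


lemma fiber_snd:
  fixes g :: "'a::euclidean_space \<Rightarrow> real \<Rightarrow> real"
  assumes meas: "(\<lambda>p. (fst p, g (fst p) (snd p))) \<in> measurable (lborel \<Otimes>\<^sub>M lborel) (lborel \<Otimes>\<^sub>M lborel)"
    and gm: "\<And>v. g v \<in> borel_measurable borel"
    and pres: "\<And>v. distr lborel borel (g v) = lborel"
  shows "distr (lborel \<Otimes>\<^sub>M lborel) (lborel \<Otimes>\<^sub>M lborel) (\<lambda>p. (fst p, g (fst p) (snd p)))
         = (lborel \<Otimes>\<^sub>M lborel :: ('a \<times> real) measure)"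
proof (rule measure_eqI)
  show "sets (distr (lborel \<Otimes>\<^sub>M lborel) (lborel \<Otimes>\<^sub>M lborel) (\<lambda>p. (fst p, g (fst p) (snd p))))
        = sets (lborel \<Otimes>\<^sub>M lborel :: ('a \<times> real) measure)" by simp
  fix A assume "A \<in> sets (distr (lborel \<Otimes>\<^sub>M lborel) (lborel \<Otimes>\<^sub>M lborel) (\<lambda>p. (fst p, g (fst p) (snd p))))"
  then have A: "A \<in> sets (lborel \<Otimes>\<^sub>M lborel :: ('a \<times> real) measure)" by simp
  let ?S = "\<lambda>p. (fst p, g (fst p) (snd p))"
  have S: "?S -` A \<inter> space (lborel \<Otimes>\<^sub>M lborel) \<in> sets (lborel \<Otimes>\<^sub>M lborel :: ('a \<times> real) measure)"
    using measurable_sets[OF meas A] .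
  have gml: "g v \<in> measurable lborel borel" for v using gm[of v] by simp
  have PA: "Pair v -` A \<in> sets (borel :: real measure)" for v
    using sets_Pair1[OF A, of v] by simp
  have "emeasure (distr (lborel \<Otimes>\<^sub>M lborel) (lborel \<Otimes>\<^sub>M lborel) ?S) A
      = emeasure (lborel \<Otimes>\<^sub>M lborel) (?S -` A \<inter> space (lborel \<Otimes>\<^sub>M lborel))"
    by (rule emeasure_distr[OF meas A])
  also have "\<dots> = (\<integral>\<^sup>+ v. emeasure lborel (Pair v -` (?S -` A \<inter> space (lborel \<Otimes>\<^sub>M lborel))) \<partial>lborel)"
    by (rule lborel.emeasure_pair_measure_alt[OF S])
  also have "\<dots> = (\<integral>\<^sup>+ v. emeasure (distr lborel borel (g v)) (Pair v -` A) \<partial>lborel)"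
  proof (rule nn_integral_cong)
    fix v :: 'a
    have "Pair v -` (?S -` A \<inter> space (lborel \<Otimes>\<^sub>M lborel)) = g v -` (Pair v -` A) \<inter> space lborel"
      by (auto simp: space_pair_measure)
    then show "emeasure lborel (Pair v -` (?S -` A \<inter> space (lborel \<Otimes>\<^sub>M lborel))) = emeasure (distr lborel borel (g v)) (Pair v -` A)"
      by (simp add: emeasure_distr[OF gml PA])
  qed
  also have "\<dots> = (\<integral>\<^sup>+ v. emeasure lborel (Pair v -` A) \<partial>lborel)"
    by (simp add: pres)
  also have "\<dots> = emeasure (lborel \<Otimes>\<^sub>M lborel) A"
    by (rule lborel.emeasure_pair_measure_alt[OF A, symmetric])
  finally show "emeasure (distr (lborel \<Otimes>\<^sub>M lborel) (lborel \<Otimes>\<^sub>M lborel) ?S) A = emeasure (lborel \<Otimes>\<^sub>M lborel) A" .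
qed

lemma fiber_fst:
  fixes h :: "real \<Rightarrow> 'a::euclidean_space \<Rightarrow> 'a"
  assumes meas: "(\<lambda>p. (h (snd p) (fst p), snd p)) \<in> measurable (lborel \<Otimes>\<^sub>M lborel) (lborel \<Otimes>\<^sub>M lborel)"
    and hm: "\<And>y. h y \<in> borel_measurable borel"
    and pres: "\<And>y. distr lborel borel (h y) = lborel"
  shows "distr (lborel \<Otimes>\<^sub>M lborel) (lborel \<Otimes>\<^sub>M lborel) (\<lambda>p. (h (snd p) (fst p), snd p))
         = (lborel \<Otimes>\<^sub>M lborel :: ('a \<times> real) measure)"
proof (rule measure_eqI)
  show "sets (distr (lborel \<Otimes>\<^sub>M lborel) (lborel \<Otimes>\<^sub>M lborel) (\<lambda>p. (h (snd p) (fst p), snd p)))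
        = sets (lborel \<Otimes>\<^sub>M lborel :: ('a \<times> real) measure)" by simp
  fix A assume "A \<in> sets (distr (lborel \<Otimes>\<^sub>M lborel) (lborel \<Otimes>\<^sub>M lborel) (\<lambda>p. (h (snd p) (fst p), snd p)))"
  then have A: "A \<in> sets (lborel \<Otimes>\<^sub>M lborel :: ('a \<times> real) measure)" by simp
  let ?S = "\<lambda>p. (h (snd p) (fst p), snd p)"
  have S: "?S -` A \<inter> space (lborel \<Otimes>\<^sub>M lborel) \<in> sets (lborel \<Otimes>\<^sub>M lborel :: ('a \<times> real) measure)"
    using measurable_sets[OF meas A] .
  have hml: "h y \<in> measurable lborel borel" for y using hm[of y] by simp
  have PA: "(\<lambda>x. (x, y)) -` A \<in> sets (borel :: 'a measure)" for y
    using sets_Pair2[OF A, of y] by simp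
  have "emeasure (distr (lborel \<Otimes>\<^sub>M lborel) (lborel \<Otimes>\<^sub>M lborel) ?S) A
      = emeasure (lborel \<Otimes>\<^sub>M lborel) (?S -` A \<inter> space (lborel \<Otimes>\<^sub>M lborel))"
    by (rule emeasure_distr[OF meas A])
  also have "\<dots> = (\<integral>\<^sup>+ y. emeasure lborel ((\<lambda>x. (x, y)) -` (?S -` A \<inter> space (lborel \<Otimes>\<^sub>M lborel))) \<partial>lborel)"
    by (rule lborel_pair.emeasure_pair_measure_alt2[OF S])
  also have "\<dots> = (\<integral>\<^sup>+ y. emeasure (distr lborel borel (h y)) ((\<lambda>x. (x, y)) -` A) \<partial>lborel)"
  proof (rule nn_integral_cong)
    fix y :: real
    have "(\<lambda>x. (x, y)) -` (?S -` A \<inter> space (lborel \<Otimes>\<^sub>M lborel)) = h y -` ((\<lambda>x. (x, y)) -` A) \<inter> space lborel"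
      by (auto simp: space_pair_measure)
    then show "emeasure lborel ((\<lambda>x. (x, y)) -` (?S -` A \<inter> space (lborel \<Otimes>\<^sub>M lborel))) = emeasure (distr lborel borel (h y)) ((\<lambda>x. (x, y)) -` A)"
      by (simp add: emeasure_distr[OF hml PA])
  qed
  also have "\<dots> = (\<integral>\<^sup>+ y. emeasure lborel ((\<lambda>x. (x, y)) -` A) \<partial>lborel)"
    by (simp add: pres)
  also have "\<dots> = emeasure (lborel \<Otimes>\<^sub>M lborel) A"
    by (rule lborel_pair.emeasure_pair_measure_alt2[OF A, symmetric])
  finally show "emeasure (distr (lborel \<Otimes>\<^sub>M lborel) (lborel \<Otimes>\<^sub>M lborel) ?S) A = emeasure (lborel \<Otimes>\<^sub>M lborel) A" .
qed


lemma spd_facts: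
  fixes M :: "real^'n^'n"
  assumes "sym_posdef M"
  shows spd_sym: "\<And>u v. (M *v u) \<bullet> v = u \<bullet> (M *v v)"
    and spd_inv: "\<And>u. M *v (matrix_inv M *v u) = u"
proof -
  have tM: "transpose M = M" and pd: "\<And>v. v \<noteq> 0 \<Longrightarrow> v \<bullet> (M *v v) > 0"
    using assms by (auto simp: sym_posdef_def)
  show "(M *v u) \<bullet> v = u \<bullet> (M *v v)" for u v
    by (metis dot_lmul_matrix inner_commute tM vector_transpose_matrix)
  have ker: "\<forall>x. M *v x = 0 \<longrightarrow> x = 0"
  proof (intro allI impI)
    fix x assume "M *v x = 0"
    then have "x \<bullet> (M *v x) = 0" by simp
    then show "x = 0" using pd[of x] by (cases "x = 0") auto
  qed
  then have "invertible M"
    using matrix_left_invertible_ker invertible_left_inverse by blast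
  then have "M ** matrix_inv M = mat 1"
    unfolding invertible_def matrix_inv_def by (rule someI_ex[where P="\<lambda>A'. M ** A' = mat 1 \<and> A' ** M = mat 1", THEN conjunct1])
  then show "M *v (matrix_inv M *v u) = u" for u
    by (metis matrix_vector_mul_assoc matrix_vector_mul_lid)
qed

lemma spd_pos:
  fixes M :: "real^'n^'n"
  assumes "sym_posdef M" "F \<noteq> 0"
  shows "F \<bullet> (matrix_inv M *v F) > 0"
proof -
  let ?w = "matrix_inv M *v F"
  have Mw: "M *v ?w = F" by (rule spd_inv[OF assms(1)])
  have "?w \<noteq> 0" using Mw assms(2) by auto
  then have "?w \<bullet> (M *v ?w) > 0" using assms(1) by (auto simp: sym_posdef_def)
  then show ?thesis using Mw by (simp add: inner_commute)
qed

locale perx =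
  fixes \<beta> :: real and M :: "real^'n^'n" and e :: real and F0 :: "real^'n"
  assumes beta: "\<beta> > 0" and Msp: "sym_posdef M" and epos: "e > 0" and F0: "F0 \<noteq> 0"
begin

definition "w = matrix_inv M *v F0"
definition "a = sqrt (F0 \<bullet> w)"
definition "rho v = exp (- \<beta> * ((1/2) * (v \<bullet> (M *v v))))"
definition "eta v = e * sqrt \<beta> * (v \<bullet> F0) / a"
definition "c = 2 * e / (sqrt \<beta> * (1 + e^2))"
definition "move v y = v - (c * (eta v + y) / a) *\<^sub>R w"
definition "T p = (move (fst p) (snd p), - (eta (fst p) + snd p) - eta (move (fst p) (snd p)))"
definition "q = 2 * e / (1 + e^2)"
definition "S1 p = (fst p + (- e * snd p / (sqrt \<beta> * a)) *\<^sub>R w, snd p)"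
definition "S2 p = (fst p, snd p + q * (sqrt \<beta> * (fst p \<bullet> F0) / a))"
definition "R p = (fst p, - snd (p::(real^'n) \<times> real))"

lemma Mw: "M *v w = F0" unfolding w_def by (rule spd_inv[OF Msp])
lemma Msym: "(M *v u) \<bullet> v = u \<bullet> (M *v v)" by (rule spd_sym[OF Msp])
lemma wF: "F0 \<bullet> w > 0" unfolding w_def by (rule spd_pos[OF Msp F0])
lemma apos: "a > 0" using wF by (simp add: a_def)
lemma a2: "a^2 = F0 \<bullet> w" using wF by (simp add: a_def)
lemma wF': "w \<bullet> F0 = a^2" using a2 by (simp add: inner_commute)
lemma sb: "sqrt \<beta> > 0" "(sqrt \<beta>)^2 = \<beta>" using beta by auto
lemma qc: "q = sqrt \<beta> * c" using sb by (simp add: q_def c_def)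
lemma q_e: "q * (1 + e^2) = 2 * e"
proof -
  have h: "(1::real) + e^2 > 0" by (simp add: add_pos_nonneg)
  show ?thesis unfolding q_def using h by simp
qed

lemma inner_add_w: "(v + d *\<^sub>R w) \<bullet> F0 = v \<bullet> F0 + d * a^2"
  by (simp add: inner_add_left wF')
lemma inner_diff_w: "(v - d *\<^sub>R w) \<bullet> F0 = v \<bullet> F0 - d * a^2"
  by (simp add: inner_diff_left wF')
lemma Mvw: "(M *v v) \<bullet> w = F0 \<bullet> v"
  using Msym[of v w] Mw by (simp add: inner_commute)
lemma Fwaa: "F0 \<bullet> w = a * a" using a2 by (simp add: power2_eq_square)

lemma quad_add_w: "(v + d *\<^sub>R w) \<bullet> (M *v (v + d *\<^sub>R w)) = v \<bullet> (M *v v) + 2 * d * (v \<bullet> F0) + d^2 * a^2"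
proof -
  have "(v + d *\<^sub>R w) \<bullet> (M *v (v + d *\<^sub>R w)) = v \<bullet> (M *v v) + d * (v \<bullet> (M *v w)) + d * (w \<bullet> (M *v v)) + d * d * (w \<bullet> (M *v w))"
    by (simp add: matrix_vector_right_distrib matrix_vector_mult_scaleR inner_add_left inner_add_right algebra_simps)
  also have "w \<bullet> (M *v v) = v \<bullet> F0" using Msym[of w v] Mw by (simp add: inner_commute)
  finally show ?thesis by (simp add: Mw wF' power2_eq_square algebra_simps inner_commute Mvw Fwaa)
qed

lemma move_alt: "move v y = v + (- (c * (eta v + y) / a)) *\<^sub>R w"
  by (simp add: move_def)

lemma T_decomp: "T = R \<circ> S1 \<circ> S2 \<circ> S1"
proof
  fix p :: "(real^'n) \<times> real"
  obtain v y where p: "p = (v, y)" by (cases p)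
  define u where "u = sqrt \<beta> * (v \<bullet> F0) / a"
  have ap: "a > 0" by (rule apos)
  have s: "sqrt \<beta> > 0" by (rule sb)
  define y2 where "y2 = y + q * (u - e * y)"
  have u1: "sqrt \<beta> * ((v - (e * y / (sqrt \<beta> * a)) *\<^sub>R w) \<bullet> F0) / a = u - e * y"
    using ap s by (simp add: inner_add_w inner_diff_w u_def field_simps power2_eq_square)
  have S121: "(S1 \<circ> S2 \<circ> S1) p = (v + (- e * y / (sqrt \<beta> * a)) *\<^sub>R w + (- e * y2 / (sqrt \<beta> * a)) *\<^sub>R w, y2)"
    by (simp add: p S1_def S2_def u1 y2_def)
  have eta_v: "eta v = e * u" by (simp add: eta_def u_def)
  have coef: "- e * y / (sqrt \<beta> * a) + - e * y2 / (sqrt \<beta> * a) = - (c * (eta v + y) / a)"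
  proof -
    have hq: "q + q*e^2 = 2*e" using q_e by (simp add: algebra_simps)
    have "y * (q + q*e^2) = y*(2*e)" using hq by simp
    then have H: "e * (y + y2) = sqrt \<beta> * c * (e*u + y)"
      unfolding y2_def qc[symmetric] by (simp add: algebra_simps power2_eq_square)
    have "- e * y / (sqrt \<beta> * a) + - e * y2 / (sqrt \<beta> * a) = - (e * (y + y2)) / (sqrt \<beta> * a)"
      by (simp add: add_divide_distrib[symmetric] algebra_simps)
    also have "\<dots> = - (c * (e*u + y) / a)" using ap s by (simp add: H)
    finally show ?thesis by (simp add: eta_v)
  qed
  have mv: "move v y = v + (- e * y / (sqrt \<beta> * a)) *\<^sub>R w + (- e * y2 / (sqrt \<beta> * a)) *\<^sub>R w"
    unfolding move_alt coef[symmetric] scaleR_add_left by (simp add: algebra_simps)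
  have eta_mv: "eta (move v y) = e * (u - q * (e * u + y))"
  proof -
    have "eta (move v y) = e * sqrt \<beta> * ((v + (- (c * (eta v + y) / a)) *\<^sub>R w) \<bullet> F0) / a"
      by (simp add: eta_def move_alt)
    also have "\<dots> = e * (u - sqrt \<beta> * c * (eta v + y))"
      using ap by (simp add: inner_add_w inner_diff_w u_def field_simps power2_eq_square)
    finally show ?thesis by (simp add: qc eta_v)
  qed
  have snd_eq: "- (eta v + y) - eta (move v y) = - y2"
  proof -
    have "q + q * e^2 = 2 * e" using q_e by (simp add: algebra_simps)
    then have "u * (q + q * e^2) = u * (2 * e)" by simp
    then show ?thesis by (simp add: eta_mv eta_v y2_def algebra_simps power2_eq_square)
  qed
  have Tp: "T p = (move v y, - y2)" unfolding T_def p snd_eq[symmetric] by simp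
  show "T p = (R \<circ> S1 \<circ> S2 \<circ> S1) p"
    unfolding Tp using S121 by (simp add: R_def mv)
qed

end

lemma alg_refl:
  fixes q e u s :: real
  assumes "q * (1 + e^2) = 2 * e"
  shows "- 2 * q * u * s + q^2 * s^2 + (- s - e * (u - q * s))^2 = (s - e * u)^2"
proof -
  have "- 2 * q * u * s + q^2 * s^2 + (- s - e * (u - q * s))^2 - (s - e * u)^2
        = (2*e - e^2*q - q) * (2 * u * s - q * s^2)"
    by (simp add: algebra_simps power2_eq_square)
  also have "2*e - e^2*q - q = 0" using assms by (simp add: algebra_simps)
  finally show ?thesis by simp
qed

lemma aux_b: "(b::real) > 0 \<Longrightarrow> a > 0 \<Longrightarrow> (b*b) * V - 2*(b*b)*(c * s/a)*P + (b*b)*(c * s/a)^2*a^2 = (b*b)*V - 2*(b*c)*(b*P/a) * s + (b*c)^2 * s^2"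
  by (simp add: field_simps power2_eq_square)

context perx begin

lemma eta_move: "eta (move v y) = eta v - e * q * (eta v + y)"
proof -
  have "eta (move v y) = e * sqrt \<beta> * ((v - (c * (eta v + y) / a) *\<^sub>R w) \<bullet> F0) / a"
    by (simp add: eta_def move_def)
  also have "\<dots> = e * sqrt \<beta> * (v \<bullet> F0) / a - e * (sqrt \<beta> * c) * (eta v + y)"
    using apos by (simp add: inner_diff_w field_simps power2_eq_square)
  finally show ?thesis by (simp add: qc eta_def algebra_simps)
qed

lemma quad_move: "move v y \<bullet> (M *v move v y) = v \<bullet> (M *v v) - 2 * (c * (eta v + y) / a) * (v \<bullet> F0) + (c * (eta v + y) / a)^2 * a^2"
  using quad_add_w[of v "- (c * (eta v + y) / a)"] by (simp add: move_alt)

definition "G p = rho (fst p) * std_normal_density (snd p)"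

lemma G_T: "G (T p) = G p"
proof -
  obtain v y where p: "p = (v, y)" by (cases p)
  define P where "P = v \<bullet> F0"
  define u where "u = sqrt \<beta> * P / a"
  define s where "s = eta v + y"
  have etav: "eta v = e * u" by (simp add: eta_def u_def P_def)
  have ap: "a > 0" by (rule apos)
  have sb2: "sqrt \<beta> * sqrt \<beta> = \<beta>" using beta by simp
  have qd: "\<beta> * (move v y \<bullet> (M *v move v y)) = \<beta> * (v \<bullet> (M *v v)) - 2 * q * u * s + q^2 * s^2"
  proof -
    have "\<beta> * (move v y \<bullet> (M *v move v y)) = \<beta> * (v \<bullet> (M *v v)) - 2 * (sqrt \<beta> * sqrt \<beta>) * (c * s / a) * P + (sqrt \<beta> * sqrt \<beta>) * (c * s / a)^2 * a^2"
      unfolding quad_move sb2 by (simp add: s_def P_def algebra_simps)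
    also have "\<dots> = (sqrt \<beta> * sqrt \<beta>) * (v \<bullet> (M *v v)) - 2 * (sqrt \<beta> * c) * (sqrt \<beta> * P / a) * s + (sqrt \<beta> * c)^2 * s^2"
      using aux_b[OF sb(1) ap] sb2 by simp
    also have "\<dots> = \<beta> * (v \<bullet> (M *v v)) - 2 * q * u * s + q^2 * s^2"
      unfolding sb2 qc u_def ..
    finally show ?thesis .
  qed
  have y': "- (eta v + y) - eta (move v y) = - s - e * (u - q * s)"
    by (simp add: eta_move s_def etav algebra_simps)
  have y0: "y = s - e * u" by (simp add: s_def etav)
  have key: "\<beta> * (move v y \<bullet> (M *v move v y)) + (- s - e * (u - q * s))^2 = \<beta> * (v \<bullet> (M *v v)) + y^2"
  proof -
    have yy: "y^2 = (s - e * u)^2" using y0 by simp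
    show ?thesis using qd yy alg_refl[OF q_e, of u s] by linarith
  qed
  have "G (T p) = rho (move v y) * std_normal_density (- s - e * (u - q * s))"
    unfolding G_def T_def p y'[symmetric] by simp
  also have "\<dots> = (1 / sqrt (2 * pi)) * exp (- (\<beta> * (move v y \<bullet> (M *v move v y)) + (- s - e * (u - q * s))^2) / 2)"
    by (simp add: rho_def std_normal_density_def exp_add[symmetric] field_simps)
  also have "\<dots> = (1 / sqrt (2 * pi)) * exp (- (\<beta> * (v \<bullet> (M *v v)) + y^2) / 2)"
    by (simp only: key)
  also have "\<dots> = G p"
    by (simp add: G_def p rho_def std_normal_density_def exp_add[symmetric] field_simps)
  finally show ?thesis .
qed

lemma T_snd: "eta (fst (T p)) + snd (T p) = - (eta (fst p) + snd p)"
  by (simp add: T_def)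
lemma T_fst: "fst (T p) = move (fst p) (snd p)"
  by (simp add: T_def)

abbreviation "N \<equiv> (lborel \<Otimes>\<^sub>M lborel :: ((real^'n) \<times> real) measure)"

lemma S1_meas: "S1 \<in> measurable N N" unfolding S1_def by measurable
lemma S2_meas: "S2 \<in> measurable N N" unfolding S2_def by measurable
lemma R_meas: "R \<in> measurable N N" unfolding R_def by measurable

lemma distr_plus_right: "distr lborel borel (\<lambda>v. v + X) = (lborel :: 'b::euclidean_space measure)"
proof -
  have "(\<lambda>v. v + X) = (+) X" by (rule ext) (simp add: add.commute)
  then show ?thesis using lborel_distr_plus[of X] by simp
qed

lemma S1_distr: "distr N N S1 = N"
proof -
  have eq: "S1 = (\<lambda>p. ((\<lambda>y v. v + (- e * y / (sqrt \<beta> * a)) *\<^sub>R w) (snd p) (fst p), snd p))"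
    by (simp add: S1_def fun_eq_iff)
  show ?thesis unfolding eq
  proof (rule fiber_fst)
    show "(\<lambda>p. ((\<lambda>y v. v + (- e * y / (sqrt \<beta> * a)) *\<^sub>R w) (snd p) (fst p), snd p)) \<in> measurable N N"
      using S1_meas eq by simp
    show "(\<lambda>v. v + (- e * y / (sqrt \<beta> * a)) *\<^sub>R w) \<in> borel_measurable borel" for y by measurable
    show "distr lborel borel (\<lambda>v. v + (- e * y / (sqrt \<beta> * a)) *\<^sub>R w) = lborel" for y
      by (rule distr_plus_right)
  qed
qed

lemma S2_distr: "distr N N S2 = N"
proof -
  have eq: "S2 = (\<lambda>p. (fst p, (\<lambda>v y. y + q * (sqrt \<beta> * (v \<bullet> F0) / a)) (fst p) (snd p)))"
    by (simp add: S2_def fun_eq_iff)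
  show ?thesis unfolding eq
  proof (rule fiber_snd)
    show "(\<lambda>p. (fst p, (\<lambda>v y. y + q * (sqrt \<beta> * (v \<bullet> F0) / a)) (fst p) (snd p))) \<in> measurable N N"
      using S2_meas eq by simp
    show "(\<lambda>y. y + q * (sqrt \<beta> * (v \<bullet> F0) / a)) \<in> borel_measurable borel" for v by measurable
    show "distr lborel borel (\<lambda>y. y + q * (sqrt \<beta> * (v \<bullet> F0) / a)) = lborel" for v
      by (rule distr_plus_right)
  qed
qed

lemma R_distr: "distr N N R = N"
proof -
  have eq: "R = (\<lambda>p. (fst p, (\<lambda>v y. - y) (fst p) (snd p)))"
    by (simp add: R_def fun_eq_iff)
  show ?thesis unfolding eq
  proof (rule fiber_snd)
    show "(\<lambda>p. (fst p, (\<lambda>v y. - y) (fst p) (snd p))) \<in> measurable N N"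
      using R_meas eq by simp
    show "(\<lambda>y::real. - y) \<in> borel_measurable borel" for v :: "real^'n" by measurable
    show "distr lborel borel (\<lambda>y::real. - y) = lborel" for v :: "real^'n"
      using lborel_distr_uminus by (simp add: fun_eq_iff)
  qed
qed

lemma T_meas: "T \<in> measurable N N"
  unfolding T_decomp using S1_meas S2_meas R_meas by (intro measurable_comp) auto

lemma T_distr: "distr N N T = N"
proof -
  have "distr N N (R \<circ> S1 \<circ> S2 \<circ> S1) = distr (distr (distr (distr N N S1) N S2) N S1) N R"
    using S1_meas S2_meas R_meas
    by (simp add: distr_distr measurable_comp comp_assoc)
  then show ?thesis unfolding T_decomp by (simp add: S1_distr S2_distr R_distr)
qed

lemma T_integral:
  fixes f :: "(real^'n) \<times> real \<Rightarrow> real"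
  assumes "f \<in> borel_measurable N"
  shows "integral\<^sup>L N f = integral\<^sup>L N (\<lambda>p. f (T p))"
proof -
  have "integral\<^sup>L N f = integral\<^sup>L (distr N N T) f" by (simp add: T_distr)
  also have "\<dots> = integral\<^sup>L N (\<lambda>p. f (T p))" by (rule integral_distr[OF T_meas assms])
  finally show ?thesis .
qed

end

lemma integrable_prod_sep:
  fixes f :: "'a::euclidean_space \<Rightarrow> real" and g :: "'b::euclidean_space \<Rightarrow> real"
  assumes f: "integrable lborel f" and g: "integrable lborel g"
  shows "integrable (lborel \<Otimes>\<^sub>M lborel) (\<lambda>p. f (fst p) * g (snd p))"
proof (rule lborel_pair.Fubini_integrable)
  have [measurable]: "f \<in> borel_measurable lborel" "g \<in> borel_measurable lborel"
    using f g by auto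
  show "(\<lambda>p. f (fst p) * g (snd p)) \<in> borel_measurable (lborel \<Otimes>\<^sub>M lborel)" by measurable
  have "integrable lborel (\<lambda>x. \<bar>f x\<bar> * (\<integral>y. \<bar>g y\<bar> \<partial>lborel))"
    using f by (intro Bochner_Integration.integrable_mult_left) auto
  then show "integrable lborel (\<lambda>x. \<integral>y. norm (f (fst (x, y)) * g (snd (x, y))) \<partial>lborel)"
    by (simp add: abs_mult)
  show "AE x in lborel. integrable lborel (\<lambda>y. f (fst (x, y)) * g (snd (x, y)))"
    using g by (auto intro!: Bochner_Integration.integrable_mult_right)
qed

lemma spd_lower:
  fixes M :: "real^'n^'n"
  assumes "sym_posdef M"
  obtains m where "m > 0" "\<And>v. v \<bullet> (M *v v) \<ge> m * (norm v)^2"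
proof -
  have pd: "\<And>v. v \<noteq> 0 \<Longrightarrow> v \<bullet> (M *v v) > 0" using assms by (auto simp: sym_posdef_def)
  have cont: "continuous_on (sphere 0 1) (\<lambda>v::real^'n. v \<bullet> (M *v v))"
    by (intro continuous_intros linear_continuous_on matrix_vector_mul_linear bounded_linear_inner_left) 
       (simp add: linear_linear matrix_vector_mul_linear)
  have ne: "sphere (0::real^'n) 1 \<noteq> {}" by simp
  obtain u where u: "u \<in> sphere 0 1" and umin: "\<And>v. v \<in> sphere 0 1 \<Longrightarrow> u \<bullet> (M *v u) \<le> v \<bullet> (M *v v)"
    using continuous_attains_inf[OF compact_sphere ne cont] by blast
  have u0: "u \<noteq> 0" using u by auto
  define m where "m = u \<bullet> (M *v u)"
  have m: "m > 0" using pd[OF u0] by (simp add: m_def)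
  have "v \<bullet> (M *v v) \<ge> m * (norm v)^2" for v
  proof (cases "v = 0")
    case True then show ?thesis by simp
  next
    case False
    define z where "z = (1 / norm v) *\<^sub>R v"
    have z: "z \<in> sphere 0 1" using False by (simp add: z_def)
    have vz: "v = norm v *\<^sub>R z" using False by (simp add: z_def)
    have "v \<bullet> (M *v v) = (norm v)^2 * (z \<bullet> (M *v z))"
      by (subst (1 2) vz) (simp add: matrix_vector_mult_scaleR power2_eq_square)
    moreover have "m \<le> z \<bullet> (M *v z)" using umin[OF z] by (simp add: m_def)
    ultimately show ?thesis by (metis mult_right_mono zero_le_power2 mult.commute)
  qed
  then show ?thesis using m that by blast
qed

lemma mv_meas[measurable]: "((*v) (A::real^'n^'m)) \<in> borel_measurable borel"
  by (intro borel_measurable_continuous_onI linear_continuous_on matrix_vector_mul_bounded_linear)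

context perx begin

lemma rho_bound: obtains cc where "cc > 0" "\<And>v. rho v \<le> exp (- cc * (norm v)^2)"
proof -
  obtain m where m: "m > 0" "\<And>v. v \<bullet> (M *v v) \<ge> m * (norm v)^2"
    using spd_lower[OF Msp] by blast
  have "rho v \<le> exp (- (\<beta> * m / 2) * (norm v)^2)" for v
    unfolding rho_def using m(2)[of v] beta by (simp add: mult_left_mono)
  then show ?thesis using that[of "\<beta> * m / 2"] m beta by simp
qed

lemma rho_pos: "rho v > 0" by (simp add: rho_def)

lemma rho_meas[measurable]: "rho \<in> borel_measurable borel"
  unfolding rho_def by measurable

lemma eta_meas[measurable]: "eta \<in> borel_measurable borel"
  unfolding eta_def by measurable

lemma move_meas[measurable]: "(\<lambda>p. move (fst p) (snd p)) \<in> borel_measurable (lborel \<Otimes>\<^sub>M lborel)"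
  unfolding move_def by measurable

lemma int_rho1: "integrable lborel (\<lambda>v. (1 + norm v) * rho v)"
proof -
  obtain cc where cc: "cc > 0" "\<And>v. rho v \<le> exp (- cc * (norm v)^2)" using rho_bound by blast
  show ?thesis
  proof (rule Bochner_Integration.integrable_bound[OF gaussN[OF cc(1)]])
    show "(\<lambda>v. (1 + norm v) * rho v) \<in> borel_measurable lborel" by measurable
    show "AE v in lborel. norm ((1 + norm v) * rho v) \<le> norm ((1 + norm v) * exp (- cc * (norm v)^2))"
      using cc(2) rho_pos by (auto intro!: mult_left_mono simp: abs_mult less_imp_le)
  qed
qed

lemma int_gauss1: "integrable lborel (\<lambda>y. (1 + \<bar>y\<bar>) * std_normal_density y)"
proof -
  have "integrable lborel (\<lambda>y. std_normal_density y * \<bar>y - 0\<bar>^0 + std_normal_density y * \<bar>y - 0\<bar>^1)"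
    by (intro Bochner_Integration.integrable_add integrable_normal_moment_abs) auto
  then show ?thesis by (simp add: algebra_simps)
qed

definition "Phi p = ((1 + norm (fst p)) * rho (fst p)) * ((1 + \<bar>snd p\<bar>) * std_normal_density (snd p))"

lemma int_Phi: "integrable N Phi"
  unfolding Phi_def by (rule integrable_prod_sep[OF int_rho1 int_gauss1])

lemma Phi_nonneg: "Phi p \<ge> 0"
  unfolding Phi_def using rho_pos by (simp add: less_imp_le)

definition "Ceta = e * sqrt \<beta> * norm F0 / a"

lemma eta_bound: "\<bar>eta v\<bar> \<le> Ceta * norm v"
proof -
  have "\<bar>v \<bullet> F0\<bar> \<le> norm v * norm F0" by (rule Cauchy_Schwarz_ineq2)
  then show ?thesis using apos epos beta
    by (simp add: eta_def Ceta_def abs_mult divide_right_mono mult_left_mono field_simps)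
qed

lemma Ceta_nonneg: "Ceta \<ge> 0" using apos epos beta by (simp add: Ceta_def)

lemma G_bound:
  "G p * (\<bar>eta (fst p)\<bar> + \<bar>snd p\<bar>) \<le> (Ceta + 1) * Phi p"
proof -
  obtain v y where p: "p = (v, y)" by (cases p)
  have "\<bar>eta v\<bar> + \<bar>y\<bar> \<le> (Ceta + 1) * ((1 + norm v) * (1 + \<bar>y\<bar>))"
    using eta_bound[of v] Ceta_nonneg
    by (simp add: algebra_simps) (smt (verit, best) mult_nonneg_nonneg norm_ge_zero)
  then have "rho v * std_normal_density y * (\<bar>eta v\<bar> + \<bar>y\<bar>) \<le> rho v * std_normal_density y * ((Ceta + 1) * ((1 + norm v) * (1 + \<bar>y\<bar>)))"
    using rho_pos by (intro mult_left_mono) (auto simp: less_imp_le)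
  then show ?thesis by (simp add: G_def Phi_def p algebra_simps)
qed

lemma G_nonneg: "G p \<ge> 0" using rho_pos by (simp add: G_def less_imp_le)

lemma G_meas[measurable]: "G \<in> borel_measurable N"
  unfolding G_def by measurable

end

context perx begin

lemma int_by_G:
  fixes f :: "(real^'n) \<times> real \<Rightarrow> real"
  assumes f: "f \<in> borel_measurable N"
    and b: "\<And>p. \<bar>f p\<bar> \<le> B * (G p * (\<bar>eta (fst p)\<bar> + \<bar>snd p\<bar>))"
  shows "integrable N f"
proof (rule Bochner_Integration.integrable_bound)
  show "integrable N (\<lambda>p. \<bar>B\<bar> * ((Ceta + 1) * Phi p))"
    by (intro Bochner_Integration.integrable_mult_right int_Phi)
  show "f \<in> borel_measurable N" by (rule f)
  show "AE p in N. norm (f p) \<le> norm (\<bar>B\<bar> * ((Ceta + 1) * Phi p))"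
  proof (rule AE_I2)
    fix p
    have g: "0 \<le> G p * (\<bar>eta (fst p)\<bar> + \<bar>snd p\<bar>)" using G_nonneg by simp
    have "\<bar>f p\<bar> \<le> \<bar>B\<bar> * (G p * (\<bar>eta (fst p)\<bar> + \<bar>snd p\<bar>))"
      using b[of p] g by (smt (verit) mult_right_mono abs_ge_self)
    also have "\<dots> \<le> \<bar>B\<bar> * ((Ceta + 1) * Phi p)"
      using G_bound[of p] by (intro mult_left_mono) auto
    finally show "norm (f p) \<le> norm (\<bar>B\<bar> * ((Ceta + 1) * Phi p))"
      using Phi_nonneg[of p] Ceta_nonneg by simp
  qed
qed

lemma perx_main:
  fixes \<psi> :: "real^'n \<Rightarrow> real" and B :: real
  assumes \<psi>c: "continuous_on UNIV \<psi>" and \<psi>B: "\<And>v. \<bar>\<psi> v\<bar> \<le> B"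
  shows "(\<integral>v. rho v * (sqrt \<beta> / e * a *
            (\<integral>y. (\<psi> (move v y) - \<psi> v) * (max (eta v + y) 0 * std_normal_density y) \<partial>lborel)) \<partial>lborel)
         = - \<beta> * (\<integral>v. rho v * (\<psi> v * (F0 \<bullet> v)) \<partial>lborel)"
proof -
  have [measurable]: "\<psi> \<in> borel_measurable borel" using \<psi>c by (rule borel_measurable_continuous_onI)
  define K where "K = sqrt \<beta> / e * a"
  define H where "H v y = (\<psi> (move v y) - \<psi> v) * (max (eta v + y) 0 * std_normal_density y)" for v y
  define s where "s p = eta (fst p) + snd p" for p :: "(real^'n) \<times> real"
  define P1 where "P1 p = G p * (\<psi> (move (fst p) (snd p)) * max (s p) 0)" for p
  define P2 where "P2 p = G p * (\<psi> (fst p) * max (s p) 0)" for p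
  define P3 where "P3 p = G p * (\<psi> (fst p) * max (- s p) 0)" for p
  define P4 where "P4 p = G p * (\<psi> (fst p) * s p)" for p
  have sm[measurable]: "s \<in> borel_measurable N" unfolding s_def by measurable
  have mm[measurable]: "(\<lambda>p. \<psi> (move (fst p) (snd p))) \<in> borel_measurable N"
    unfolding move_def by measurable
  have B0: "B \<ge> 0" using \<psi>B[of 0] by simp
  have sabs: "\<bar>s p\<bar> \<le> \<bar>eta (fst p)\<bar> + \<bar>snd p\<bar>" for p by (simp add: s_def)
  have gen: "\<bar>G p * (x * m)\<bar> \<le> B * (G p * (\<bar>eta (fst p)\<bar> + \<bar>snd p\<bar>))"
    if "\<bar>x\<bar> \<le> B" "\<bar>m\<bar> \<le> \<bar>s p\<bar>" for p x m
  proof -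
    have "\<bar>x * m\<bar> \<le> B * (\<bar>eta (fst p)\<bar> + \<bar>snd p\<bar>)"
      using that sabs[of p] B0 by (simp add: abs_mult) (meson abs_ge_zero mult_mono order_trans)
    then show ?thesis using G_nonneg[of p]
      by (simp add: abs_mult) (metis mult.left_commute mult_left_mono)
  qed
  have i1: "integrable N P1" unfolding P1_def
    by (rule int_by_G[where B=B]) (auto intro!: gen \<psi>B)
  have i2: "integrable N P2" unfolding P2_def
    by (rule int_by_G[where B=B]) (auto intro!: gen \<psi>B)
  have i3: "integrable N P3" unfolding P3_def
    by (rule int_by_G[where B=B]) (auto intro!: gen \<psi>B)
  have i4: "integrable N P4" unfolding P4_def
    by (rule int_by_G[where B=B]) (auto intro!: gen \<psi>B)
  have HP: "rho (fst p) * H (fst p) (snd p) = P1 p - P2 p" for p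
    by (simp add: H_def P1_def P2_def G_def s_def algebra_simps)
  have iH: "integrable N (\<lambda>p. rho (fst p) * H (fst p) (snd p))"
    unfolding HP using i1 i2 by (rule Bochner_Integration.integrable_diff)
  have step1: "(\<integral>v. rho v * (K * (\<integral>y. H v y \<partial>lborel)) \<partial>lborel) = K * (\<integral>v. (\<integral>y. rho v * H v y \<partial>lborel) \<partial>lborel)"
    by (simp add: mult.left_commute)
  have step2: "(\<integral>v. (\<integral>y. rho v * H v y \<partial>lborel) \<partial>lborel) = integral\<^sup>L N (\<lambda>p. rho (fst p) * H (fst p) (snd p))"
    using lborel_pair.integral_fst'[OF iH] by simp
  have step3: "integral\<^sup>L N (\<lambda>p. rho (fst p) * H (fst p) (snd p)) = integral\<^sup>L N P1 - integral\<^sup>L N P2"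
    unfolding HP by (rule Bochner_Integration.integral_diff[OF i1 i2])
  have step4: "integral\<^sup>L N P1 = integral\<^sup>L N P3"
  proof -
    have "integral\<^sup>L N P3 = integral\<^sup>L N (\<lambda>p. P3 (T p))"
      by (rule T_integral) (rule borel_measurable_integrable[OF i3])
    also have "(\<lambda>p. P3 (T p)) = P1"
    proof
      fix p
      have "s (T p) = - s p" using T_snd[of p] by (simp add: s_def)
      then show "P3 (T p) = P1 p" by (simp add: P3_def P1_def G_T T_fst)
    qed
    finally show ?thesis by simp
  qed
  have step5: "integral\<^sup>L N P3 - integral\<^sup>L N P2 = - integral\<^sup>L N P4"
  proof -
    have "integral\<^sup>L N P3 - integral\<^sup>L N P2 = integral\<^sup>L N (\<lambda>p. P3 p - P2 p)"
      by (rule Bochner_Integration.integral_diff[OF i3 i2, symmetric])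
    also have "(\<lambda>p. P3 p - P2 p) = (\<lambda>p. - P4 p)"
    proof
      fix p
      have "max (- s p) 0 - max (s p) 0 = - s p" by simp
      then show "P3 p - P2 p = - P4 p"
        by (simp add: P3_def P2_def P4_def right_diff_distrib[symmetric] del: right_diff_distrib)
    qed
    finally show ?thesis by simp
  qed
  have step6: "integral\<^sup>L N P4 = (\<integral>v. rho v * (\<psi> v * eta v) \<partial>lborel)"
  proof -
    have "integral\<^sup>L N P4 = (\<integral>v. (\<integral>y. P4 (v, y) \<partial>lborel) \<partial>lborel)"
      using lborel_pair.integral_fst'[OF i4] by simp
    also have "\<dots> = (\<integral>v. rho v * (\<psi> v * eta v) \<partial>lborel)"
    proof (rule Bochner_Integration.integral_cong[OF refl])
      fix v
      have g1: "(\<integral>y. std_normal_density y * (eta v + y) \<partial>lborel) = eta v"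
      proof -
        have "(\<integral>y. std_normal_density y * (eta v + y) \<partial>lborel)
            = (\<integral>y. eta v * std_normal_density y + std_normal_density y * y ^ (2 * 0 + 1) \<partial>lborel)"
          by (simp add: algebra_simps)
        also have "\<dots> = eta v * (\<integral>y. std_normal_density y \<partial>lborel) + (\<integral>y. std_normal_density y * y ^ (2 * 0 + 1) \<partial>lborel)"
          by (subst Bochner_Integration.integral_add)
             (auto intro!: Bochner_Integration.integrable_mult_right integrable_normal_moment_nz_1)
        also have "\<dots> = eta v"
          using integral_std_normal_moment_odd[of 0] by simp
        finally show ?thesis .
      qed
      have "(\<integral>y. P4 (v, y) \<partial>lborel) = (\<integral>y. (rho v * \<psi> v) * (std_normal_density y * (eta v + y)) \<partial>lborel)"
        by (simp add: P4_def G_def s_def algebra_simps)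
      also have "\<dots> = rho v * (\<psi> v * eta v)"
        by (simp add: g1)
      finally show "(\<integral>y. P4 (v, y) \<partial>lborel) = rho v * (\<psi> v * eta v)" .
    qed
    finally show ?thesis .
  qed
  have step7: "K * (\<integral>v. rho v * (\<psi> v * eta v) \<partial>lborel) = \<beta> * (\<integral>v. rho v * (\<psi> v * (F0 \<bullet> v)) \<partial>lborel)"
  proof -
    have Ke: "K * eta v = \<beta> * (F0 \<bullet> v)" for v
      using apos epos beta by (simp add: K_def eta_def inner_commute field_simps)
    have "K * (\<integral>v. rho v * (\<psi> v * eta v) \<partial>lborel) = (\<integral>v. rho v * \<psi> v * (K * eta v) \<partial>lborel)"
      by (simp add: algebra_simps)
    also have "\<dots> = (\<integral>v. \<beta> * (rho v * (\<psi> v * (F0 \<bullet> v))) \<partial>lborel)"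
      by (simp add: Ke algebra_simps)
    finally show ?thesis by simp
  qed
  have "(\<integral>v. rho v * (K * (\<integral>y. H v y \<partial>lborel)) \<partial>lborel) = - \<beta> * (\<integral>v. rho v * (\<psi> v * (F0 \<bullet> v)) \<partial>lborel)"
    unfolding step1 step2 step3 step4 step5 step6 using step7 by simp
  then show ?thesis by (simp add: K_def H_def)
qed

end

lemma Theta_integrable: "integrable lborel (\<lambda>y. max (\<eta> + y) 0 * std_normal_density y)"
proof (rule Bochner_Integration.integrable_bound)
  show "integrable lborel (\<lambda>y. (\<bar>\<eta>\<bar> + 1) * ((1 + \<bar>y\<bar>) * std_normal_density y))"
  proof -
    have "integrable lborel (\<lambda>y. std_normal_density y * \<bar>y - 0\<bar>^0 + std_normal_density y * \<bar>y - 0\<bar>^1)"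
      by (intro Bochner_Integration.integrable_add integrable_normal_moment_abs) auto
    then have "integrable lborel (\<lambda>y. (1 + \<bar>y\<bar>) * std_normal_density y)" by (simp add: algebra_simps)
    then show ?thesis by (rule Bochner_Integration.integrable_mult_right)
  qed
  show "(\<lambda>y. max (\<eta> + y) 0 * std_normal_density y) \<in> borel_measurable lborel" by measurable
  show "AE y in lborel. norm (max (\<eta> + y) 0 * std_normal_density y) \<le> norm ((\<bar>\<eta>\<bar> + 1) * ((1 + \<bar>y\<bar>) * std_normal_density y))"
  proof (rule AE_I2)
    fix y :: real
    have m1: "max (\<eta> + y) 0 \<le> \<bar>\<eta>\<bar> + \<bar>y\<bar>" by simp
    have m2: "0 \<le> \<bar>\<eta>\<bar> * \<bar>y\<bar>" by simp
    have "max (\<eta> + y) 0 \<le> (\<bar>\<eta>\<bar> + 1) * (1 + \<bar>y\<bar>)"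
    proof -
      have "(\<bar>\<eta>\<bar> + 1) * (1 + \<bar>y\<bar>) = 1 + \<bar>\<eta>\<bar> + \<bar>y\<bar> + \<bar>\<eta>\<bar> * \<bar>y\<bar>" by (simp add: algebra_simps)
      then show ?thesis using m1 m2 by linarith
    qed
    then have "max (\<eta> + y) 0 * std_normal_density y \<le> ((\<bar>\<eta>\<bar> + 1) * (1 + \<bar>y\<bar>)) * std_normal_density y"
      by (rule mult_right_mono) simp
    then show "norm (max (\<eta> + y) 0 * std_normal_density y) \<le> norm ((\<bar>\<eta>\<bar> + 1) * ((1 + \<bar>y\<bar>) * std_normal_density y))"
      by (simp add: abs_mult mult.assoc)
  qed
qed

lemma Theta_pos: "Theta \<eta> > 0"
proof -
  have nn: "AE y in lborel. 0 \<le> max (\<eta> + y) 0 * std_normal_density y" by simp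
  have ge: "Theta \<eta> \<ge> 0" unfolding Theta_def by (rule integral_nonneg_AE[OF nn])
  have "Theta \<eta> \<noteq> 0"
  proof
    assume "Theta \<eta> = 0"
    then have "AE y in lborel. max (\<eta> + y) 0 * std_normal_density y = 0"
      using integral_nonneg_eq_0_iff_AE[OF Theta_integrable nn] unfolding Theta_def by simp
    moreover have gp: "\<And>y. std_normal_density y > 0" by (rule normal_density_pos) simp
    have imp: "y \<notin> {- \<eta> <..< - \<eta> + 1}" if "max (\<eta> + y) 0 * std_normal_density y = 0" for y
    proof -
      have "max (\<eta> + y) 0 = 0" using that gp[of y] by simp
      then have "\<eta> + y \<le> 0" by (simp add: max_def split: if_splits)
      then show ?thesis by simp
    qed
    ultimately have "AE y in lborel. y \<notin> {- \<eta> <..< - \<eta> + 1}"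
      by (elim eventually_mono) (rule imp)
    then have "emeasure lborel {- \<eta> <..< - \<eta> + 1} = 0"
      by (subst (asm) AE_iff_measurable[of "{- \<eta> <..< - \<eta> + 1}"]) auto
    then show False by simp
  qed
  then show ?thesis using ge by simp
qed

lemma Theta_Gt: "Theta \<eta> * Gt_density \<eta> y = max (\<eta> + y) 0 * std_normal_density y"
proof -
  have t: "Theta \<eta> \<noteq> 0" using Theta_pos[of \<eta>] by simp
  have s: "sqrt (2 * pi) \<noteq> 0" by simp
  show ?thesis unfolding Gt_density_def std_normal_density_def using t s by simp
qed

context perx begin

lemma gL_rewrite:
  fixes f :: "real^'n \<Rightarrow> real"
  assumes f[measurable]: "f \<in> borel_measurable borel"
  shows "Theta (eta v) * (\<integral>v'. f v' - f v \<partial>(distr (density lborel (\<lambda>y. ennreal (Gt_density (eta v) y))) borel (\<lambda>y. move v y)))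
       = (\<integral>y. (f (move v y) - f v) * (max (eta v + y) 0 * std_normal_density y) \<partial>lborel)"
proof -
  have mm[measurable]: "(\<lambda>y. move v y) \<in> borel_measurable borel"
    unfolding move_def by measurable
  have gm[measurable]: "(\<lambda>y. Gt_density (eta v) y) \<in> borel_measurable lborel"
    unfolding Gt_density_def by measurable
  have g0: "AE y in lborel. 0 \<le> Gt_density (eta v) y"
    using Theta_pos[of "eta v"] by (auto simp: Gt_density_def)
  have "(\<integral>v'. f v' - f v \<partial>(distr (density lborel (\<lambda>y. ennreal (Gt_density (eta v) y))) borel (\<lambda>y. move v y)))
      = (\<integral>y. f (move v y) - f v \<partial>(density lborel (\<lambda>y. ennreal (Gt_density (eta v) y))))"
    by (rule integral_distr) auto
  also have "\<dots> = (\<integral>y. Gt_density (eta v) y *\<^sub>R (f (move v y) - f v) \<partial>lborel)"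
    by (rule integral_density) (auto simp: g0)
  finally have "Theta (eta v) * (\<integral>v'. f v' - f v \<partial>(distr (density lborel (\<lambda>y. ennreal (Gt_density (eta v) y))) borel (\<lambda>y. move v y)))
      = (\<integral>y. Theta (eta v) * (Gt_density (eta v) y * (f (move v y) - f v)) \<partial>lborel)"
    by simp
  also have "\<dots> = (\<integral>y. (f (move v y) - f v) * (max (eta v + y) 0 * std_normal_density y) \<partial>lborel)"
    by (rule Bochner_Integration.integral_cong[OF refl]) (subst mult.assoc[symmetric], subst Theta_Gt, simp add: mult.commute)
  finally show ?thesis .
qed

end

definition "etaG \<beta> M e F0 v = e * sqrt \<beta> * (v \<bullet> F0) / norm_Minvhalf M F0"
definition "mvG \<beta> M e F0 v y = v - ((2 * e / (sqrt \<beta> * (1 + e^2))) * (etaG \<beta> M e F0 v + y) / norm_Minvhalf M F0) *\<^sub>R (matrix_inv M *v F0)"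
definition "rhoG \<beta> (M::real^'n^'n) v = exp (- \<beta> * ((1/2) * (v \<bullet> (M *v v))))"

lemma (in perx) G_eqs:
  "a = norm_Minvhalf M F0" "eta = etaG \<beta> M e F0" "move = mvG \<beta> M e F0" "rho = rhoG \<beta> M"
  by (auto simp: fun_eq_iff a_def norm_Minvhalf_def w_def eta_def etaG_def move_def mvG_def c_def rho_def rhoG_def)

lemma perx_main_G:
  fixes \<psi> :: "real^'n \<Rightarrow> real" and M :: "real^'n^'n"
  assumes "\<beta> > 0" "sym_posdef M" "e > 0" "F0 \<noteq> 0"
    and \<psi>c: "continuous_on UNIV \<psi>" and \<psi>B: "\<And>v. \<bar>\<psi> v\<bar> \<le> B"
  shows "(\<integral>v. rhoG \<beta> M v * (sqrt \<beta> / e * norm_Minvhalf M F0 *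
            (\<integral>y. (\<psi> (mvG \<beta> M e F0 v y) - \<psi> v) * (max (etaG \<beta> M e F0 v + y) 0 * std_normal_density y) \<partial>lborel)) \<partial>lborel)
         = - \<beta> * (\<integral>v. rhoG \<beta> M v * (\<psi> v * (F0 \<bullet> v)) \<partial>lborel)"
proof -
  interpret P: perx \<beta> M e F0 using assms by unfold_locales
  show ?thesis using P.perx_main[OF \<psi>c \<psi>B] unfolding P.G_eqs .
qed

lemma integrand_rewrite:
  fixes M :: "real^'n^'n" and Fi :: "real^'n \<Rightarrow> real^'n" and \<phi> :: "(real^'n) \<times> (real^'n) \<Rightarrow> real"
  assumes "\<beta> > 0" "sym_posdef M" "\<epsilon> x > 0" "Fi x \<noteq> 0"
    and \<phi>m: "\<phi> \<in> borel_measurable borel"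
  shows "lambda_i \<beta> M \<epsilon> Fi x v * (\<integral>v'. \<phi> (x, v') - \<phi> (x, v) \<partial>(k_i \<beta> M \<epsilon> Fi x v))
       = sqrt \<beta> / \<epsilon> x * norm_Minvhalf M (Fi x) *
         (\<integral>y. (\<phi> (x, mvG \<beta> M (\<epsilon> x) (Fi x) v y) - \<phi> (x, v)) * (max (etaG \<beta> M (\<epsilon> x) (Fi x) v + y) 0 * std_normal_density y) \<partial>lborel)"
proof -
  interpret P: perx \<beta> M "\<epsilon> x" "Fi x" using assms by unfold_locales
  have fm: "(\<lambda>v'. \<phi> (x, v')) \<in> borel_measurable borel"
  proof -
    have "(\<lambda>v'. (x, v')) \<in> measurable borel (borel :: ((real^'n) \<times> (real^'n)) measure)"
      by (intro borel_measurable_continuous_onI continuous_intros)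
    then show ?thesis using \<phi>m by (rule measurable_compose)
  qed
  have eta_eq: "eta_i \<beta> M \<epsilon> Fi x v = P.eta v"
    by (simp add: eta_i_def P.G_eqs etaG_def)
  have k_eq: "k_i \<beta> M \<epsilon> Fi x v = distr (density lborel (\<lambda>y. ennreal (Gt_density (P.eta v) y))) borel (\<lambda>y. P.move v y)"
    by (simp add: k_i_def Let_def eta_eq P.G_eqs mvG_def etaG_def eta_i_def)
  have l_eq: "lambda_i \<beta> M \<epsilon> Fi x v = sqrt \<beta> / \<epsilon> x * P.a * Theta (P.eta v)"
    by (simp add: lambda_i_def eta_eq P.G_eqs)
  have "lambda_i \<beta> M \<epsilon> Fi x v * (\<integral>v'. \<phi> (x, v') - \<phi> (x, v) \<partial>(k_i \<beta> M \<epsilon> Fi x v))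
      = sqrt \<beta> / \<epsilon> x * P.a * (Theta (P.eta v) * (\<integral>v'. \<phi> (x, v') - \<phi> (x, v) \<partial>(k_i \<beta> M \<epsilon> Fi x v)))"
    by (simp add: l_eq)
  also have "\<dots> = sqrt \<beta> / \<epsilon> x * P.a * (\<integral>y. (\<phi> (x, P.move v y) - \<phi> (x, v)) * (max (P.eta v + y) 0 * std_normal_density y) \<partial>lborel)"
    unfolding k_eq using P.gL_rewrite[OF fm, of v] by simp
  finally show ?thesis by (simp add: P.G_eqs)
qed


locale mainloc =
  fixes \<beta> :: real and M :: "real^'n^'n" and U :: "real^'n \<Rightarrow> real"
    and K :: nat and F :: "nat \<Rightarrow> real^'n \<Rightarrow> real^'n" and \<epsilon> :: "real^'n \<Rightarrow> real"
    and i :: nat and \<phi> :: "(real^'n) \<times> (real^'n) \<Rightarrow> real"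
  assumes beta_pos: "\<beta> > 0"
    and M_spd: "sym_posdef M"
    and U_int: "integrable lborel (\<lambda>x. exp (- \<beta> * U x))"
    and gradU: "\<And>x. (U has_derivative (\<lambda>h. (\<Sum>j\<le>K. F j x) \<bullet> h)) (at x)"
    and F_cont: "\<And>j. j \<le> K \<Longrightarrow> continuous_on UNIV (F j)"
    and F_nonzero: "\<And>j x. 1 \<le> j \<Longrightarrow> j \<le> K \<Longrightarrow> F j x \<noteq> 0"
    and eps_cont: "continuous_on UNIV \<epsilon>"
    and eps_pos: "\<And>x. \<epsilon> x > 0"
    and i_range: "i \<in> {1..K}"
    and phi: "Cc_inf \<phi>"
begin

lemma cphi: "continuous_on UNIV \<phi>"
proof -
  have "Ck 0 \<phi>" using phi by (simp add: Cc_inf_def smooth_fun_def)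
  then show ?thesis by simp
qed

lemma phim[measurable]: "\<phi> \<in> borel_measurable borel"
  by (rule borel_measurable_continuous_onI[OF cphi])

lemma phim2[measurable]: "\<phi> \<in> borel_measurable (borel \<Otimes>\<^sub>M borel)"
  using phim by (simp add: borel_prod)

lemma Ucont: "continuous_on UNIV U"
  by (intro continuous_at_imp_continuous_on ballI has_derivative_continuous[OF gradU])

lemma Um[measurable]: "U \<in> borel_measurable borel"
  by (rule borel_measurable_continuous_onI[OF Ucont])

lemma Fic: "continuous_on UNIV (F i)" using F_cont i_range by auto
lemma Fim[measurable]: "F i \<in> borel_measurable borel" by (rule borel_measurable_continuous_onI[OF Fic])
lemma epsm[measurable]: "\<epsilon> \<in> borel_measurable borel" by (rule borel_measurable_continuous_onI[OF eps_cont])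
lemma Fnz: "F i x \<noteq> 0" using F_nonzero i_range by auto

definition "S = closure {z. \<phi> z \<noteq> 0}"
lemma cS: "compact S" using phi by (simp add: Cc_inf_def compact_support_def S_def)
lemma phi0: "z \<notin> S \<Longrightarrow> \<phi> z = 0" using closure_subset[of "{z. \<phi> z \<noteq> 0}"] by (auto simp: S_def)

lemma phiB: obtains B where "B \<ge> 0" "\<And>z. \<bar>\<phi> z\<bar> \<le> B"
proof -
  have "compact (\<phi> ` S)" by (rule compact_continuous_image[OF continuous_on_subset[OF cphi] cS]) auto
  from compact_imp_bounded[OF this] obtain B where B: "\<And>z. z \<in> S \<Longrightarrow> \<bar>\<phi> z\<bar> \<le> B"
    unfolding bounded_iff by fastforce
  have "\<bar>\<phi> z\<bar> \<le> max B 0" for z using B[of z] phi0[of z] by (cases "z \<in> S") auto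
  then show ?thesis using that[of "max B 0"] by auto
qed

definition "Px = fst ` S"
lemma cPx: "compact Px" unfolding Px_def by (rule compact_continuous_image[OF continuous_on_fst cS]) (rule continuous_on_id)
lemma phiPx: "x \<notin> Px \<Longrightarrow> \<phi> (x, v) = 0" using phi0[of "(x,v)"] by (force simp: Px_def)

definition "ax x = norm_Minvhalf M (F i x)"

lemma axc: "continuous_on UNIV ax"
proof -
  have "continuous_on UNIV (\<lambda>x. matrix_inv M *v F i x)"
    by (rule continuous_on_compose2[OF linear_continuous_on[OF matrix_vector_mul_bounded_linear] Fic]) auto
  then show ?thesis unfolding ax_def norm_Minvhalf_def
    by (intro continuous_intros Fic)
qed

lemma axpos: "ax x > 0"
  unfolding ax_def norm_Minvhalf_def using spd_pos[OF M_spd Fnz] by simp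

lemma CF: obtains CF where "CF \<ge> 0" "\<And>x. x \<in> Px \<Longrightarrow> norm (F i x) \<le> CF"
proof -
  have "compact (F i ` Px)" by (rule compact_continuous_image[OF continuous_on_subset[OF Fic] cPx]) auto
  from compact_imp_bounded[OF this] obtain C where "\<And>x. x \<in> Px \<Longrightarrow> norm (F i x) \<le> C"
    unfolding bounded_iff by fastforce
  then show ?thesis using that[of "max C 0"] by fastforce
qed

lemma Ca: obtains Ca where "Ca \<ge> 0" "\<And>x. x \<in> Px \<Longrightarrow> ax x / \<epsilon> x \<le> Ca"
proof -
  have "continuous_on UNIV (\<lambda>x. ax x / \<epsilon> x)"
    using axc eps_cont eps_pos by (intro continuous_intros) (auto simp: less_imp_neq[symmetric])
  then have "compact ((\<lambda>x. ax x / \<epsilon> x) ` Px)" by (rule compact_continuous_image[OF continuous_on_subset cPx]) auto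
  from compact_imp_bounded[OF this] obtain C where "\<And>x. x \<in> Px \<Longrightarrow> norm (ax x / \<epsilon> x) \<le> C"
    unfolding bounded_iff by fastforce
  then have "\<And>x. x \<in> Px \<Longrightarrow> ax x / \<epsilon> x \<le> max C 0"
    by (metis abs_ge_self max.coboundedI1 order_trans real_norm_def)
  then show ?thesis using that[of "max C 0"] by simp
qed

definition "h z y = (\<phi> (fst z, mvG \<beta> M (\<epsilon> (fst z)) (F i (fst z)) (snd z) y) - \<phi> z) *
     (max (etaG \<beta> M (\<epsilon> (fst z)) (F i (fst z)) (snd z) + y) 0 * std_normal_density y)"
definition "J z = (\<integral>y. h z y \<partial>lborel)"
definition "gL z = sqrt \<beta> / \<epsilon> (fst z) * ax (fst z) * J z"

lemma phim3[measurable]: "\<phi> \<in> borel_measurable (lborel \<Otimes>\<^sub>M lborel)"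
  by (simp add: lborel_prod)
lemma Um2[measurable]: "U \<in> borel_measurable lborel" by simp
lemma Fim2[measurable]: "F i \<in> borel_measurable lborel" by simp
lemma epsm2[measurable]: "\<epsilon> \<in> borel_measurable lborel" by simp

lemma hm[measurable]: "(\<lambda>p. h (fst p) (snd p)) \<in> borel_measurable ((lborel \<Otimes>\<^sub>M lborel) \<Otimes>\<^sub>M lborel)"
  unfolding h_def mvG_def etaG_def norm_Minvhalf_def by measurable

lemma Jm[measurable]: "J \<in> borel_measurable (lborel \<Otimes>\<^sub>M lborel)"
  unfolding J_def by (rule lborel.borel_measurable_lebesgue_integral) (simp add: case_prod_beta' hm)

lemma gLm[measurable]: "gL \<in> borel_measurable (lborel \<Otimes>\<^sub>M lborel)"
  unfolding gL_def ax_def norm_Minvhalf_def by measurable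

end

context mainloc begin

definition "Bp = (SOME B. B \<ge> 0 \<and> (\<forall>z. \<bar>\<phi> z\<bar> \<le> B))"
lemma Bp: "Bp \<ge> 0" "\<bar>\<phi> z\<bar> \<le> Bp"
proof -
  have ex: "\<exists>B. B \<ge> 0 \<and> (\<forall>z. \<bar>\<phi> z\<bar> \<le> B)" using phiB by metis
  show "Bp \<ge> 0" "\<bar>\<phi> z\<bar> \<le> Bp" using someI_ex[OF ex] unfolding Bp_def[symmetric] by (auto, metis prod.collapse)
qed

definition "CFp = (SOME C. C \<ge> 0 \<and> (\<forall>x\<in>Px. norm (F i x) \<le> C))"
lemma CFp: "CFp \<ge> 0" "x \<in> Px \<Longrightarrow> norm (F i x) \<le> CFp"
proof -
  have ex: "\<exists>C. C \<ge> 0 \<and> (\<forall>x\<in>Px. norm (F i x) \<le> C)" using CF by metis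
  show "CFp \<ge> 0" "x \<in> Px \<Longrightarrow> norm (F i x) \<le> CFp" using someI_ex[OF ex] unfolding CFp_def[symmetric] by auto
qed

definition "Cap = (SOME C. C \<ge> 0 \<and> (\<forall>x\<in>Px. ax x / \<epsilon> x \<le> C))"
lemma Cap: "Cap \<ge> 0" "x \<in> Px \<Longrightarrow> ax x / \<epsilon> x \<le> Cap"
proof -
  have ex: "\<exists>C. C \<ge> 0 \<and> (\<forall>x\<in>Px. ax x / \<epsilon> x \<le> C)" using Ca by metis
  show "Cap \<ge> 0" "x \<in> Px \<Longrightarrow> ax x / \<epsilon> x \<le> Cap" using someI_ex[OF ex] unfolding Cap_def[symmetric] by auto
qed

definition "m1 = sqrt (2 / pi)"

lemma J_zero: "x \<notin> Px \<Longrightarrow> J (x, v) = 0"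
  by (simp add: J_def h_def phiPx)

lemma J_bound: "\<bar>J (x, v)\<bar> \<le> 2 * Bp * (\<bar>etaG \<beta> M (\<epsilon> x) (F i x) v\<bar> + m1)"
proof -
  define \<eta> where "\<eta> = etaG \<beta> M (\<epsilon> x) (F i x) v"
  define bnd where "bnd y = 2 * Bp * (\<bar>\<eta>\<bar> * std_normal_density y + std_normal_density y * \<bar>y\<bar> ^ (2 * 0 + 1))" for y
  have ib: "integrable lborel bnd"
    unfolding bnd_def
    by (intro Bochner_Integration.integrable_mult_right Bochner_Integration.integrable_add
        integrable_std_normal_moment_abs integrable_normal_density) auto
  have hb: "\<bar>h (x, v) y\<bar> \<le> bnd y" for y
  proof -
    have d: "\<bar>\<phi> (x, mvG \<beta> M (\<epsilon> x) (F i x) v y) - \<phi> (x, v)\<bar> \<le> 2 * Bp"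
      using Bp(2)[of "(x, mvG \<beta> M (\<epsilon> x) (F i x) v y)"] Bp(2)[of "(x, v)"] by linarith
    have m: "\<bar>max (\<eta> + y) 0\<bar> \<le> \<bar>\<eta>\<bar> + \<bar>y\<bar>" by simp
    have "\<bar>h (x, v) y\<bar> = \<bar>\<phi> (x, mvG \<beta> M (\<epsilon> x) (F i x) v y) - \<phi> (x, v)\<bar> * (\<bar>max (\<eta> + y) 0\<bar> * std_normal_density y)"
      by (simp add: h_def \<eta>_def abs_mult)
    also have "\<dots> \<le> (2 * Bp) * ((\<bar>\<eta>\<bar> + \<bar>y\<bar>) * std_normal_density y)"
      using d m Bp(1) by (intro mult_mono mult_right_mono) auto
    also have "\<dots> = bnd y" by (simp add: bnd_def algebra_simps)
    finally show ?thesis .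
  qed
  have hmeas: "h (x, v) \<in> borel_measurable lborel"
    unfolding h_def mvG_def etaG_def norm_Minvhalf_def by measurable
  have ih: "integrable lborel (\<lambda>y. norm (h (x, v) y))"
  proof (rule Bochner_Integration.integrable_bound[OF ib])
    show "(\<lambda>y. norm (h (x, v) y)) \<in> borel_measurable lborel" using hmeas by measurable
    show "AE y in lborel. norm (norm (h (x, v) y)) \<le> norm (bnd y)"
      using hb by (auto intro!: AE_I2 order_trans[OF _ abs_ge_self])
  qed
  have "\<bar>J (x, v)\<bar> \<le> (\<integral>y. norm (h (x, v) y) \<partial>lborel)"
    unfolding J_def using integral_norm_bound[of lborel "h (x, v)"] by simp
  also have "\<dots> \<le> integral\<^sup>L lborel bnd"
    by (rule integral_mono[OF ih ib]) (simp add: hb)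
  also have "\<dots> = 2 * Bp * (\<bar>\<eta>\<bar> + m1)"
  proof -
    have i1: "(\<integral>y. \<bar>\<eta>\<bar> * std_normal_density y + std_normal_density y * \<bar>y\<bar> ^ (2 * 0 + 1) \<partial>lborel)
        = (\<integral>y. \<bar>\<eta>\<bar> * std_normal_density y \<partial>lborel) + (\<integral>y. std_normal_density y * \<bar>y\<bar> ^ (2 * 0 + 1) \<partial>lborel)"
      by (rule Bochner_Integration.integral_add)
         (use integrable_std_normal_moment_abs[of 1] in \<open>auto intro!: Bochner_Integration.integrable_mult_right\<close>)
    have "integral\<^sup>L lborel bnd = 2 * Bp * (\<integral>y. \<bar>\<eta>\<bar> * std_normal_density y + std_normal_density y * \<bar>y\<bar> ^ (2 * 0 + 1) \<partial>lborel)"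
      unfolding bnd_def by (rule Bochner_Integration.integral_mult_right_zero)
    also have "\<dots> = 2 * Bp * (\<bar>\<eta>\<bar> + m1)"
      unfolding i1 integral_std_normal_moment_abs_odd by (simp add: m1_def)
    finally show ?thesis .
  qed
  finally show ?thesis by (simp add: \<eta>_def)
qed

definition "C1 = 2 * Bp * (\<beta> * CFp + sqrt \<beta> * Cap * m1)"

lemma C1_nonneg: "C1 \<ge> 0"
  using Bp(1) CFp(1) Cap(1) beta_pos by (simp add: C1_def m1_def)

lemma gL_bound: "\<bar>gL (x, v)\<bar> \<le> C1 * (indicator Px x * (1 + norm v))"
proof (cases "x \<in> Px")
  case False then show ?thesis by (simp add: gL_def J_zero)
next
  case True
  define Kx where "Kx = sqrt \<beta> / \<epsilon> x * ax x"
  have Kx0: "Kx \<ge> 0" using eps_pos[of x] axpos[of x] beta_pos by (simp add: Kx_def)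
  have e0: "\<epsilon> x > 0" by (rule eps_pos)
  have a0: "ax x > 0" by (rule axpos)
  have Keta: "Kx * \<bar>etaG \<beta> M (\<epsilon> x) (F i x) v\<bar> = \<beta> * \<bar>v \<bullet> F i x\<bar>"
    using e0 a0 beta_pos
    by (simp add: Kx_def etaG_def ax_def[symmetric] abs_mult abs_divide field_simps)
  have Km: "Kx * m1 \<le> sqrt \<beta> * Cap * m1"
  proof -
    have "Kx = sqrt \<beta> * (ax x / \<epsilon> x)" by (simp add: Kx_def)
    also have "\<dots> \<le> sqrt \<beta> * Cap" using Cap(2)[OF True] beta_pos by (intro mult_left_mono) auto
    finally show ?thesis by (intro mult_right_mono) (auto simp: m1_def)
  qed
  have vF: "\<bar>v \<bullet> F i x\<bar> \<le> norm v * CFp"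
    using Cauchy_Schwarz_ineq2[of v "F i x"] CFp(2)[OF True]
    by (meson mult_left_mono norm_ge_zero order_trans)
  have "\<bar>gL (x, v)\<bar> = Kx * \<bar>J (x, v)\<bar>" using e0 a0 beta_pos by (simp add: gL_def Kx_def abs_mult)
  also have "\<dots> \<le> Kx * (2 * Bp * (\<bar>etaG \<beta> M (\<epsilon> x) (F i x) v\<bar> + m1))"
    by (rule mult_left_mono[OF J_bound Kx0])
  also have "\<dots> = 2 * Bp * (Kx * \<bar>etaG \<beta> M (\<epsilon> x) (F i x) v\<bar> + Kx * m1)"
    by (simp add: algebra_simps)
  also have "\<dots> \<le> 2 * Bp * (\<beta> * (norm v * CFp) + sqrt \<beta> * Cap * m1)"
    unfolding Keta using vF Km Bp(1) beta_pos
    by (intro mult_left_mono add_mono) auto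
  also have "\<dots> \<le> C1 * (1 + norm v)"
  proof -
    have "\<beta> * (norm v * CFp) + sqrt \<beta> * Cap * m1 \<le> (\<beta> * CFp + sqrt \<beta> * Cap * m1) * (1 + norm v)"
      using CFp(1) Cap(1) beta_pos by (simp add: algebra_simps m1_def)
    then show ?thesis using Bp(1) unfolding C1_def by (metis mult.assoc mult_left_mono zero_le_numeral mult_nonneg_nonneg)
  qed
  finally show ?thesis using True by simp
qed

lemma rhs_bound: "\<bar>\<phi> (x, v) * (F i x \<bullet> v)\<bar> \<le> (Bp * CFp) * (indicator Px x * (1 + norm v))"
proof (cases "x \<in> Px")
  case False then show ?thesis by (simp add: phiPx)
next
  case True
  have "\<bar>F i x \<bullet> v\<bar> \<le> CFp * (1 + norm v)"
  proof -
    have "\<bar>F i x \<bullet> v\<bar> \<le> norm (F i x) * norm v" by (rule Cauchy_Schwarz_ineq2)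
    also have "\<dots> \<le> CFp * norm v" using CFp(2)[OF True] by (intro mult_right_mono) auto
    also have "\<dots> \<le> CFp * (1 + norm v)" using CFp(1) by (intro mult_left_mono) auto
    finally show ?thesis .
  qed
  then have "\<bar>\<phi> (x, v) * (F i x \<bullet> v)\<bar> \<le> Bp * (CFp * (1 + norm v))"
    unfolding abs_mult using Bp by (intro mult_mono) auto
  then show ?thesis using True by (simp add: algebra_simps)
qed

end

context mainloc begin

definition "D z = exp (- \<beta> * Ham U M z)"

lemma D_split: "D (x, v) = exp (- \<beta> * U x) * rhoG \<beta> M v"
  by (simp add: D_def Ham_def rhoG_def exp_add[symmetric] algebra_simps)

lemma Dm[measurable]: "D \<in> borel_measurable (lborel \<Otimes>\<^sub>M lborel)"
  unfolding D_def Ham_def by measurable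

lemma D_nonneg: "D z \<ge> 0" by (simp add: D_def)

definition "Cm = C1 + Bp * CFp"
lemma Cm_ge: "C1 \<le> Cm" "Bp * CFp \<le> Cm"
  using C1_nonneg Bp(1) CFp(1) by (auto simp: Cm_def)

definition "Mj z = Cm * ((indicator Px (fst z) * exp (- \<beta> * U (fst z))) * ((1 + norm (snd z)) * rhoG \<beta> M (snd z)))"

lemma int_rhoG: "integrable lborel (\<lambda>v. (1 + norm v) * rhoG \<beta> M v)"
proof -
  interpret P0: perx \<beta> M "\<epsilon> 0" "F i 0" using beta_pos M_spd eps_pos Fnz by unfold_locales
  show ?thesis using P0.int_rho1 unfolding P0.G_eqs .
qed

lemma int_Mj: "integrable (lborel \<Otimes>\<^sub>M lborel) Mj"
proof -
  have f: "integrable lborel (\<lambda>x. indicator Px x * exp (- \<beta> * U x))"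
    using integrable_mult_indicator[OF _ U_int, of Px] borel_compact[OF cPx] by simp
  show ?thesis unfolding Mj_def
    by (intro Bochner_Integration.integrable_mult_right integrable_prod_sep f int_rhoG)
qed

lemma Mj_ge: "D z * ((indicator Px (fst z)) * (1 + norm (snd z))) * C \<le> Mj z" if "C \<le> Cm" "0 \<le> C" for z C
proof -
  obtain x v where z: "z = (x, v)" by (cases z)
  have "D z * ((indicator Px (fst z)) * (1 + norm (snd z))) * C
      = C * ((indicator Px x * exp (- \<beta> * U x)) * ((1 + norm v) * rhoG \<beta> M v))"
    by (simp add: z D_split algebra_simps)
  also have "\<dots> \<le> Cm * ((indicator Px x * exp (- \<beta> * U x)) * ((1 + norm v) * rhoG \<beta> M v))"
    using that by (intro mult_right_mono) (auto simp: rhoG_def)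
  finally show ?thesis by (simp add: Mj_def z)
qed

lemma intL: "integrable (lborel \<Otimes>\<^sub>M lborel) (\<lambda>z. D z * gL z)"
proof (rule Bochner_Integration.integrable_bound[OF int_Mj])
  show "(\<lambda>z. D z * gL z) \<in> borel_measurable (lborel \<Otimes>\<^sub>M lborel)" by measurable
  show "AE z in lborel \<Otimes>\<^sub>M lborel. norm (D z * gL z) \<le> norm (Mj z)"
  proof (rule AE_I2)
    fix z :: "(real^'n) \<times> (real^'n)"
    obtain x v where z: "z = (x, v)" by (cases z)
    have "norm (D z * gL z) = D z * \<bar>gL (x, v)\<bar>" using D_nonneg[of z] by (simp add: z abs_mult)
    also have "\<dots> \<le> D z * (C1 * (indicator Px x * (1 + norm v)))"
      by (rule mult_left_mono[OF gL_bound D_nonneg])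
    also have "\<dots> = D z * ((indicator Px (fst z)) * (1 + norm (snd z))) * C1" by (simp add: z)
    also have "\<dots> \<le> Mj z" by (rule Mj_ge[OF Cm_ge(1) C1_nonneg])
    also have "\<dots> \<le> norm (Mj z)" by simp
    finally show "norm (D z * gL z) \<le> norm (Mj z)" .
  qed
qed

lemma intR: "integrable (lborel \<Otimes>\<^sub>M lborel) (\<lambda>z. D z * (\<phi> z * (F i (fst z) \<bullet> snd z)))"
proof (rule Bochner_Integration.integrable_bound[OF int_Mj])
  show "(\<lambda>z. D z * (\<phi> z * (F i (fst z) \<bullet> snd z))) \<in> borel_measurable (lborel \<Otimes>\<^sub>M lborel)" by measurable
  show "AE z in lborel \<Otimes>\<^sub>M lborel. norm (D z * (\<phi> z * (F i (fst z) \<bullet> snd z))) \<le> norm (Mj z)"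
  proof (rule AE_I2)
    fix z :: "(real^'n) \<times> (real^'n)"
    obtain x v where z: "z = (x, v)" by (cases z)
    have "norm (D z * (\<phi> z * (F i (fst z) \<bullet> snd z))) = D z * \<bar>\<phi> (x, v) * (F i x \<bullet> v)\<bar>"
      using D_nonneg[of z] by (simp add: z abs_mult)
    also have "\<dots> \<le> D z * ((Bp * CFp) * (indicator Px x * (1 + norm v)))"
      by (rule mult_left_mono[OF rhs_bound D_nonneg])
    also have "\<dots> = D z * ((indicator Px (fst z)) * (1 + norm (snd z))) * (Bp * CFp)" by (simp add: z)
    also have "\<dots> \<le> Mj z" by (rule Mj_ge[OF Cm_ge(2)]) (use Bp(1) CFp(1) in simp)
    also have "\<dots> \<le> norm (Mj z)" by simp
    finally show "norm (D z * (\<phi> z * (F i (fst z) \<bullet> snd z))) \<le> norm (Mj z)" .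
  qed
qed

lemma perx_id: "(\<integral>v. D (x, v) * gL (x, v) \<partial>lborel) = - \<beta> * (\<integral>v. D (x, v) * (\<phi> (x, v) * (F i x \<bullet> v)) \<partial>lborel)"
proof -
  have \<psi>c: "continuous_on UNIV (\<lambda>v. \<phi> (x, v))"
    by (rule continuous_on_compose2[OF cphi]) (auto intro!: continuous_intros)
  have main: "(\<integral>v. rhoG \<beta> M v * (sqrt \<beta> / \<epsilon> x * norm_Minvhalf M (F i x) *
            (\<integral>y. (\<phi> (x, mvG \<beta> M (\<epsilon> x) (F i x) v y) - \<phi> (x, v)) * (max (etaG \<beta> M (\<epsilon> x) (F i x) v + y) 0 * std_normal_density y) \<partial>lborel)) \<partial>lborel)
         = - \<beta> * (\<integral>v. rhoG \<beta> M v * (\<phi> (x, v) * (F i x \<bullet> v)) \<partial>lborel)"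
    by (rule perx_main_G[OF beta_pos M_spd eps_pos Fnz \<psi>c Bp(2)])
  have "(\<integral>v. D (x, v) * gL (x, v) \<partial>lborel) = (\<integral>v. exp (- \<beta> * U x) * (rhoG \<beta> M v * gL (x, v)) \<partial>lborel)"
    by (simp add: D_split mult.assoc)
  also have "\<dots> = exp (- \<beta> * U x) * (\<integral>v. rhoG \<beta> M v * gL (x, v) \<partial>lborel)"
    by simp
  also have "(\<integral>v. rhoG \<beta> M v * gL (x, v) \<partial>lborel) = - \<beta> * (\<integral>v. rhoG \<beta> M v * (\<phi> (x, v) * (F i x \<bullet> v)) \<partial>lborel)"
    unfolding main[symmetric] by (simp add: gL_def J_def h_def ax_def)
  also have "exp (- \<beta> * U x) * (- \<beta> * (\<integral>v. rhoG \<beta> M v * (\<phi> (x, v) * (F i x \<bullet> v)) \<partial>lborel))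
      = - \<beta> * (\<integral>v. exp (- \<beta> * U x) * (rhoG \<beta> M v * (\<phi> (x, v) * (F i x \<bullet> v))) \<partial>lborel)"
    by simp
  also have "\<dots> = - \<beta> * (\<integral>v. D (x, v) * (\<phi> (x, v) * (F i x \<bullet> v)) \<partial>lborel)"
    by (simp add: D_split mult.assoc)
  finally show ?thesis .
qed

lemma key: "(\<integral>z. D z * gL z \<partial>lborel) = - \<beta> * (\<integral>z. D z * (\<phi> z * (F i (fst z) \<bullet> snd z)) \<partial>lborel)"
proof -
  have "(\<integral>z. D z * gL z \<partial>lborel) = (\<integral>z. D z * gL z \<partial>(lborel \<Otimes>\<^sub>M lborel))"
    by (simp add: lborel_prod)
  also have "\<dots> = (\<integral>x. (\<integral>v. D (x, v) * gL (x, v) \<partial>lborel) \<partial>lborel)"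
    by (rule lborel_pair.integral_fst'[OF intL, symmetric])
  also have "\<dots> = (\<integral>x. - \<beta> * (\<integral>v. D (x, v) * (\<phi> (x, v) * (F i x \<bullet> v)) \<partial>lborel) \<partial>lborel)"
    by (simp add: perx_id)
  also have "\<dots> = - \<beta> * (\<integral>x. (\<integral>v. D (x, v) * (\<phi> (x, v) * (F i (fst (x, v)) \<bullet> snd (x, v))) \<partial>lborel) \<partial>lborel)"
    by simp
  also have "(\<integral>x. (\<integral>v. D (x, v) * (\<phi> (x, v) * (F i (fst (x, v)) \<bullet> snd (x, v))) \<partial>lborel) \<partial>lborel)
      = (\<integral>z. D z * (\<phi> z * (F i (fst z) \<bullet> snd z)) \<partial>(lborel \<Otimes>\<^sub>M lborel))"
    by (rule lborel_pair.integral_fst'[OF intR])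
  also have "\<dots> = (\<integral>z. D z * (\<phi> z * (F i (fst z) \<bullet> snd z)) \<partial>lborel)"
    by (simp add: lborel_prod)
  finally show ?thesis .
qed

lemma result:
  "(\<integral>z. lambda_i \<beta> M \<epsilon> (F i) (fst z) (snd z) *
             (\<integral>v'. \<phi> (fst z, v') - \<phi> z \<partial>(k_i \<beta> M \<epsilon> (F i) (fst z) (snd z)))
          \<partial>(mu \<beta> U M))
       = - \<beta> * (\<integral>z. \<phi> z * (F i (fst z) \<bullet> snd z) \<partial>(mu \<beta> U M))"
proof -
  define Z where "Z = (\<integral>w. exp (- \<beta> * Ham U M w) \<partial>lborel)"
  have Z0: "Z \<ge> 0" unfolding Z_def by (rule integral_nonneg_AE) simp
  have mu_eq: "mu \<beta> U M = density lborel (\<lambda>z. ennreal (D z / Z))"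
    by (simp add: mu_def D_def Z_def)
  have Dl[measurable]: "D \<in> borel_measurable lborel" using Dm by (simp add: lborel_prod)
  have dens: "integral\<^sup>L (mu \<beta> U M) g = (1 / Z) * (\<integral>z. D z * g z \<partial>lborel)"
    if g: "g \<in> borel_measurable lborel" for g :: "(real^'n) \<times> (real^'n) \<Rightarrow> real"
  proof -
    have "integral\<^sup>L (mu \<beta> U M) g = (\<integral>z. (D z / Z) *\<^sub>R g z \<partial>lborel)"
      unfolding mu_eq by (rule integral_density[OF g]) (auto simp: D_nonneg Z0)
    also have "\<dots> = (\<integral>z. (1 / Z) * (D z * g z) \<partial>lborel)" by simp
    also have "\<dots> = (1 / Z) * (\<integral>z. D z * g z \<partial>lborel)" by (rule integral_mult_right_zero)
    finally show ?thesis .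
  qed
  have pw: "lambda_i \<beta> M \<epsilon> (F i) (fst z) (snd z) * (\<integral>v'. \<phi> (fst z, v') - \<phi> z \<partial>(k_i \<beta> M \<epsilon> (F i) (fst z) (snd z))) = gL z" for z
  proof -
    obtain x v where z: "z = (x, v)" by (cases z)
    show ?thesis
      unfolding z using integrand_rewrite[where \<beta>=\<beta> and M=M and \<epsilon>=\<epsilon> and x=x and Fi="F i" and \<phi>=\<phi> and v=v, OF beta_pos M_spd eps_pos Fnz phim]
      by (simp add: gL_def J_def h_def ax_def)
  qed
  have gLl: "gL \<in> borel_measurable lborel" using gLm by (simp add: lborel_prod)
  have Rl: "(\<lambda>z. \<phi> z * (F i (fst z) \<bullet> snd z)) \<in> borel_measurable lborel"
  proof -
    have "(\<lambda>z. \<phi> z * (F i (fst z) \<bullet> snd z)) \<in> borel_measurable (lborel \<Otimes>\<^sub>M lborel)" by measurable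
    then show ?thesis by (simp add: lborel_prod)
  qed
  have "(\<integral>z. lambda_i \<beta> M \<epsilon> (F i) (fst z) (snd z) * (\<integral>v'. \<phi> (fst z, v') - \<phi> z \<partial>(k_i \<beta> M \<epsilon> (F i) (fst z) (snd z))) \<partial>(mu \<beta> U M))
      = integral\<^sup>L (mu \<beta> U M) gL"
    by (simp add: pw)
  also have "\<dots> = (1 / Z) * (\<integral>z. D z * gL z \<partial>lborel)" by (rule dens[OF gLl])
  also have "\<dots> = - \<beta> * ((1 / Z) * (\<integral>z. D z * (\<phi> z * (F i (fst z) \<bullet> snd z)) \<partial>lborel))"
    by (simp add: key)
  also have "(1 / Z) * (\<integral>z. D z * (\<phi> z * (F i (fst z) \<bullet> snd z)) \<partial>lborel) = (\<integral>z. \<phi> z * (F i (fst z) \<bullet> snd z) \<partial>(mu \<beta> U M))"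
    by (rule dens[OF Rl, symmetric])
  finally show ?thesis .
qed

end

theorem mainTheorem2:
  fixes \<beta> :: real and M :: "real^'n^'n" and U :: "real^'n \<Rightarrow> real"
    and K :: nat and F :: "nat \<Rightarrow> real^'n \<Rightarrow> real^'n" and \<epsilon> :: "real^'n \<Rightarrow> real"
    and i :: nat and \<phi> :: "(real^'n) \<times> (real^'n) \<Rightarrow> real"
  assumes beta_pos: "\<beta> > 0"
    and M_spd: "sym_posdef M"
    and U_smooth: "smooth_fun U"
    and U_int: "integrable lborel (\<lambda>x. exp (- \<beta> * U x))"
    and gradU: "\<And>x. (U has_derivative (\<lambda>h. (\<Sum>j\<le>K. F j x) \<bullet> h)) (at x)"
    and F_cont: "\<And>j. j \<le> K \<Longrightarrow> continuous_on UNIV (F j)"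
    and F_nonzero: "\<And>j x. 1 \<le> j \<Longrightarrow> j \<le> K \<Longrightarrow> F j x \<noteq> 0"
    and eps_cont: "continuous_on UNIV \<epsilon>"
    and eps_pos: "\<And>x. \<epsilon> x > 0"
    and i_range: "i \<in> {1..K}"
    and phi: "Cc_inf \<phi>"
  shows "(\<integral>z. lambda_i \<beta> M \<epsilon> (F i) (fst z) (snd z) *
             (\<integral>v'. \<phi> (fst z, v') - \<phi> z \<partial>(k_i \<beta> M \<epsilon> (F i) (fst z) (snd z)))
          \<partial>(mu \<beta> U M))
       = - \<beta> * (\<integral>z. \<phi> z * (F i (fst z) \<bullet> snd z) \<partial>(mu \<beta> U M))"
proof -
  interpret mainloc \<beta> M U K F \<epsilon> i \<phi>
    by (rule mainloc.intro) (use beta_pos M_spd U_int gradU F_cont F_nonzero eps_cont eps_pos i_range phi in auto)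
  show ?thesis by (rule result)
qed

end
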